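(* For any $\vec s\in\mathbb Z^k$ and $\vec r\in\mathbb Z_{>0}^k$, the function $\varepsilon\mapsto Z(\vec s;\vec r;\varepsilon)$ (defined for $\mathrm{Re}\,\varepsilon<0$) lies in $\mathbb C\{\{\varepsilon,\varepsilon^{-1}\}[\ln(-\varepsilon)]$. If moreover $\vec s\in\mathbb Z_{\le0}^k$, then it lies in $\mathbb C\{\{\varepsilon,\varepsilon^{-1}\}$.
   Context: $Z(\vec s;\vec r;\varepsilon)=\sum_{n_1>\dots>n_k>0}e^{\varepsilon(n_1r_1+\dots+n_kr_k)}n_1^{-s_1}\cdots n_k^{-s_k}$ for $\mathrm{Re}\,\varepsilon<0$. $\mathbb C\{\{\varepsilon,\varepsilon^{-1}\}$ is the algebra of convergent Laurent series at $0$ (with finitely many negative powers), regarded as germs of functions meromorphic near $\varepsilon=0$; $\ln$ is the branch analytic on $\mathbb C\setminus(-\infty,0]$. Membership means that on some region of $\{\mathrm{Re}\,\varepsilon<0\}$ near $0$, $Z$ agrees with $\sum_{n=0}^M a_n(\varepsilon)\ln^n(-\varepsilon)$ for some $a_n\in\mathbb C\{\{\varepsilon,\varepsilon^{-1}\}$. *)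

theory Defs
  imports "HOL-Analysis.Analysis"
begin

definition mz_index :: "nat \<Rightarrow> nat list set" where
  "mz_index k = {n. length n = k \<and> sorted_wrt (>) n \<and> (\<forall>x\<in>set n. 0 < x)}"

definition mz_term :: "int list \<Rightarrow> nat list \<Rightarrow> complex \<Rightarrow> nat list \<Rightarrow> complex" where
  "mz_term s r eps n =
     (\<Prod>i<length s. exp (eps * of_nat (n ! i * r ! i)) * (of_nat (n ! i)) powi (- (s ! i)))"

text \<open>Z(s; r; eps), meaningful for Re eps < 0 (absolutely convergent there).\<close>
definition Zfun :: "int list \<Rightarrow> nat list \<Rightarrow> complex \<Rightarrow> complex" where
  "Zfun s r eps = (\<Sum>\<^sub>\<infinity> n\<in>mz_index (length s). mz_term s r eps n)"

definition conv_laurent :: "(complex \<Rightarrow> complex) \<Rightarrow> bool" where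
  "conv_laurent a \<longleftrightarrow> (\<exists>R>0. \<exists>N::nat. \<exists>c::nat \<Rightarrow> complex.
      \<forall>z. 0 < norm z \<and> norm z < R \<longrightarrow> (\<lambda>m. c m * z powi (int m - int N)) sums a z)"

definition in_laurent_log :: "(complex \<Rightarrow> complex) \<Rightarrow> bool" where
  "in_laurent_log f \<longleftrightarrow> (\<exists>M::nat. \<exists>a::nat \<Rightarrow> complex \<Rightarrow> complex. (\<forall>j\<le>M. conv_laurent (a j)) \<and>
      (\<exists>\<delta>>0. \<forall>eps. Re eps < 0 \<and> norm eps < \<delta> \<longrightarrow>
          f eps = (\<Sum>j\<le>M. a j eps * (Ln (- eps)) ^ j)))"

definition in_laurent :: "(complex \<Rightarrow> complex) \<Rightarrow> bool" where
  "in_laurent f \<longleftrightarrow> (\<exists>a. conv_laurent a \<and>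
      (\<exists>\<delta>>0. \<forall>eps. Re eps < 0 \<and> norm eps < \<delta> \<longrightarrow> f eps = a eps))"

end

theory Submission
  imports Defs "HOL-Complex_Analysis.Complex_Analysis" "HOL-Real_Asymp.Real_Asymp"
begin


definition w :: "int \<times> nat \<Rightarrow> complex \<Rightarrow> nat \<Rightarrow> complex" where
  "w p e n = exp (e * of_nat (n * snd p)) * (of_nat n) powi (- fst p)"

primrec T :: "(int \<times> nat) list \<Rightarrow> complex \<Rightarrow> nat \<Rightarrow> complex" where
  "T [] e b = 1"
| "T (p # ps) e b = (\<Sum>n\<in>{1..<b}. w p e n * T ps e n)"

primrec Kb :: "(int \<times> nat) list \<Rightarrow> nat" where
  "Kb [] = 0" | "Kb (p # ps) = nat \<bar>fst p\<bar> + Kb ps + 1"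

definition Zf :: "(int \<times> nat) list \<Rightarrow> complex \<Rightarrow> complex" where
  "Zf sr e = lim (\<lambda>b. T sr e b)"

lemma powi_le_pow:
  fixes x :: real assumes "1 \<le> x" shows "x powi m \<le> x ^ nat \<bar>m\<bar>"
proof (cases "m \<ge> 0")
  case True then show ?thesis by (simp add: power_int_def)
next
  case False
  have "x powi m = inverse (x ^ nat (- m))" using False by (simp add: power_int_def power_inverse)
  also have "\<dots> \<le> 1" using assms by (simp add: inverse_le_1_iff one_le_power)
  also have "1 \<le> x ^ nat \<bar>m\<bar>" using assms by (simp add: one_le_power)
  finally show ?thesis .
qed

lemma norm_w: "norm (w p e n) = exp (Re e * real (n * snd p)) * real n powi (- fst p)"
  by (simp add: w_def norm_mult norm_power_int)

lemma norm_w_le: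
  assumes "Re e \<le> 0" "1 \<le> n" shows "norm (w p e n) \<le> real n ^ nat \<bar>fst p\<bar>"
proof -
  have "exp (Re e * real (n * snd p)) \<le> 1"
    using assms by (simp add: mult_nonpos_nonneg)
  moreover have "real n powi (- fst p) \<le> real n ^ nat \<bar>fst p\<bar>"
    using powi_le_pow[of "real n" "- fst p"] assms by simp
  moreover have "0 \<le> real n powi (- fst p)" by simp
  ultimately have "exp (Re e * real (n * snd p)) * real n powi (- fst p) \<le> 1 * real n ^ nat \<bar>fst p\<bar>"
    by (intro mult_mono) auto
  thus ?thesis by (simp add: norm_w)
qed

lemma T_bound:
  assumes "Re e \<le> 0" shows "norm (T ps e b) \<le> real b ^ Kb ps"
proof (induction ps arbitrary: b)
  case Nil then show ?case by simp
next
  case (Cons p ps)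
  have "norm (T (p # ps) e b) \<le> (\<Sum>n\<in>{1..<b}. norm (w p e n) * norm (T ps e n))"
    by (simp add: norm_mult[symmetric] norm_sum)
  also have "\<dots> \<le> (\<Sum>n\<in>{1..<b}. real b ^ (nat \<bar>fst p\<bar> + Kb ps))"
  proof (intro sum_mono)
    fix n assume n: "n \<in> {1..<b}"
    have "norm (w p e n) * norm (T ps e n) \<le> real n ^ nat \<bar>fst p\<bar> * real n ^ Kb ps"
      using n assms Cons.IH[of n] norm_w_le[of e n p] by (intro mult_mono) auto
    also have "\<dots> = real n ^ (nat \<bar>fst p\<bar> + Kb ps)" by (simp add: power_add)
    also have "\<dots> \<le> real b ^ (nat \<bar>fst p\<bar> + Kb ps)" using n by (intro power_mono) auto
    finally show "norm (w p e n) * norm (T ps e n) \<le> real b ^ (nat \<bar>fst p\<bar> + Kb ps)" .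
  qed
  also have "\<dots> = real (b - 1) * real b ^ (nat \<bar>fst p\<bar> + Kb ps)" by simp
  also have "\<dots> \<le> real b * real b ^ (nat \<bar>fst p\<bar> + Kb ps)"
    by (intro mult_right_mono) auto
  also have "\<dots> = real b ^ Kb (p # ps)" by simp
  finally show ?case .
qed

lemma summable_poly_geom:
  fixes q :: real assumes "0 < q" "q < 1"
  shows "summable (\<lambda>n. real n ^ m * q ^ n)"
proof -
  define a where "a = sqrt q"
  have a: "0 < a" "a < 1" using assms by (auto simp: a_def real_sqrt_lt_1_iff)
  have "(\<lambda>n. real n ^ m * a ^ n) \<longlonglongrightarrow> 0" using a by real_asymp
  hence "eventually (\<lambda>n. norm (real n ^ m * a ^ n) < 1) sequentially"
    by (rule order_tendstoD(2)[OF tendsto_norm_zero]) simp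
  hence ev: "eventually (\<lambda>n. norm (real n ^ m * q ^ n) \<le> a ^ n) sequentially"
  proof eventually_elim
    case (elim n)
    have "q ^ n = a ^ n * a ^ n" using assms by (simp add: a_def power_mult_distrib[symmetric])
    hence "norm (real n ^ m * q ^ n) = norm (real n ^ m * a ^ n) * a ^ n"
      using a by (simp add: abs_mult)
    also have "\<dots> \<le> 1 * a ^ n" using elim a by (intro mult_right_mono) auto
    finally show ?case by simp
  qed
  show ?thesis
    by (rule summable_comparison_test_ev[OF ev]) (use a in \<open>auto intro: summable_geometric\<close>)
qed

lemma sum_shift1: "(\<Sum>n\<in>{1..<Suc b}. f n) = (\<Sum>n<b. f (Suc n))"
  using sum.shift_bounds_Suc_ivl[of f 0 b] by (simp add: atLeast0LessThan)

lemma exp_bound_w: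
  assumes "Re e \<le> c" "c < 0" "0 < r"
  shows "exp (Re e * real (Suc n * r)) \<le> exp c ^ Suc n"
proof -
  have "Re e * real (Suc n * r) \<le> c * real (Suc n * r)"
    using assms by (intro mult_right_mono) auto
  also have "c * real (Suc n * r) \<le> c * real (Suc n)"
  proof (rule mult_left_mono_neg)
    have "Suc n * 1 \<le> Suc n * r" using assms by (intro mult_le_mono2) simp
    hence "Suc n \<le> Suc n * r" by simp
    thus "real (Suc n) \<le> real (Suc n * r)" by (simp only: of_nat_le_iff)
  qed (use assms in auto)
  finally have "exp (Re e * real (Suc n * r)) \<le> exp (real (Suc n) * c)"
    by (simp add: mult.commute)
  also have "\<dots> = exp c ^ Suc n" by (rule exp_of_nat_mult)
  finally show ?thesis .
qed

lemma Zterm_bound: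
  assumes "Re e \<le> c" "c < 0" "0 < snd p"
  shows "norm (w p e (Suc n) * T ps e (Suc n)) \<le> real (Suc n) ^ (nat \<bar>fst p\<bar> + Kb ps) * exp c ^ Suc n"
proof -
  have 1: "norm (w p e (Suc n)) \<le> exp c ^ Suc n * real (Suc n) ^ nat \<bar>fst p\<bar>"
  proof -
    have a: "exp (Re e * real (Suc n * snd p)) \<le> exp c ^ Suc n"
      using exp_bound_w[OF assms] .
    have b: "real (Suc n) powi (- fst p) \<le> real (Suc n) ^ nat \<bar>fst p\<bar>"
      using powi_le_pow[of "real (Suc n)" "- fst p"] by simp
    have "norm (w p e (Suc n)) = exp (Re e * real (Suc n * snd p)) * real (Suc n) powi (- fst p)"
      by (rule norm_w)
    also have "\<dots> \<le> exp c ^ Suc n * real (Suc n) ^ nat \<bar>fst p\<bar>"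
      by (rule mult_mono[OF a b]) auto
    finally show ?thesis .
  qed
  have 2: "norm (T ps e (Suc n)) \<le> real (Suc n) ^ Kb ps"
    by (rule T_bound) (use assms in simp)
  have "norm (w p e (Suc n) * T ps e (Suc n)) = norm (w p e (Suc n)) * norm (T ps e (Suc n))"
    by (rule norm_mult)
  also have "\<dots> \<le> (exp c ^ Suc n * real (Suc n) ^ nat \<bar>fst p\<bar>) * real (Suc n) ^ Kb ps"
    by (rule mult_mono[OF 1 2]) auto
  also have "\<dots> = real (Suc n) ^ (nat \<bar>fst p\<bar> + Kb ps) * exp c ^ Suc n"
    by (simp only: power_add mult_ac)
  finally show ?thesis .
qed

lemma summable_poly_geom_Suc:
  assumes "c < 0"
  shows "summable (\<lambda>n. real (Suc n) ^ m * exp c ^ Suc n)"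
proof -
  have "summable (\<lambda>n. real n ^ m * exp c ^ n)"
    by (rule summable_poly_geom) (use assms in auto)
  thus ?thesis using summable_iff_shift[of "\<lambda>n. real n ^ m * exp c ^ n" 1] by simp
qed

lemma summable_Zterm:
  assumes "Re e < 0" "0 < snd p"
  shows "summable (\<lambda>n. norm (w p e (Suc n) * T ps e (Suc n)))"
proof (rule summable_comparison_test'[where N=0])
  show "summable (\<lambda>n. real (Suc n) ^ (nat \<bar>fst p\<bar> + Kb ps) * exp (Re e) ^ Suc n)"
    by (rule summable_poly_geom_Suc) (use assms in auto)
  show "norm (norm (w p e (Suc n) * T ps e (Suc n))) \<le> real (Suc n) ^ (nat \<bar>fst p\<bar> + Kb ps) * exp (Re e) ^ Suc n" for n
    using Zterm_bound[of e "Re e" p n ps] assms by simp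
qed

lemma T_Cons_Suc: "T (p # ps) e (Suc b) = (\<Sum>n<b. w p e (Suc n) * T ps e (Suc n))"
  by (simp only: T.simps sum_shift1)

lemma Zf_sums:
  assumes "Re e < 0" "0 < snd p"
  shows "(\<lambda>n. w p e (Suc n) * T ps e (Suc n)) sums Zf (p # ps) e"
proof -
  have sm: "summable (\<lambda>n. w p e (Suc n) * T ps e (Suc n))"
    using summable_Zterm[OF assms] by (rule summable_norm_cancel)
  hence "(\<lambda>b. T (p # ps) e (Suc b)) \<longlonglongrightarrow> (\<Sum>n. w p e (Suc n) * T ps e (Suc n))"
    unfolding T_Cons_Suc by (simp add: summable_LIMSEQ)
  hence lim: "(\<lambda>b. T (p # ps) e b) \<longlonglongrightarrow> (\<Sum>n. w p e (Suc n) * T ps e (Suc n))"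
    by (rule LIMSEQ_imp_Suc)
  hence "Zf (p # ps) e = (\<Sum>n. w p e (Suc n) * T ps e (Suc n))"
    unfolding Zf_def by (rule limI)
  with sm show ?thesis by (simp add: summable_sums)
qed

lemma T_lim:
  assumes "Re e < 0" "\<forall>p\<in>set sr. 0 < snd p"
  shows "(\<lambda>b. T sr e b) \<longlonglongrightarrow> Zf sr e"
proof (cases sr)
  case Nil then show ?thesis by (simp add: Zf_def)
next
  case (Cons p ps)
  have s: "(\<lambda>n. w p e (Suc n) * T ps e (Suc n)) sums Zf (p # ps) e"
    using Zf_sums[of e p ps] assms Cons by simp
  have "(\<lambda>b. T (p # ps) e (Suc b)) \<longlonglongrightarrow> Zf (p # ps) e"
    using s unfolding sums_def T_Cons_Suc .
  hence "(\<lambda>b. T (p # ps) e b) \<longlonglongrightarrow> Zf (p # ps) e" by (rule LIMSEQ_imp_Suc)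
  thus ?thesis using Cons by simp
qed


definition dec :: "nat \<Rightarrow> (int \<times> nat) list \<Rightarrow> (int \<times> nat) list" where
  "dec i ps = ps[i := (fst (ps!i) - 1, snd (ps!i))]"

lemma dec_Cons_0 [simp]: "dec 0 (p#ps) = (fst p - 1, snd p) # ps"
  by (simp add: dec_def)

lemma dec_Cons_Suc [simp]: "dec (Suc i) (p#ps) = p # dec i ps"
  by (simp add: dec_def)

lemma length_dec [simp]: "length (dec i ps) = length ps"
  by (simp add: dec_def)

lemma dec_pos:
  assumes "\<forall>q\<in>set ps. 0 < snd q" "i < length ps"
  shows "\<forall>q\<in>set (dec i ps). 0 < snd q"
proof -
  have "set (dec i ps) \<subseteq> insert (fst (ps!i) - 1, snd (ps!i)) (set ps)"
    by (simp add: dec_def set_update_subset_insert)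
  moreover have "0 < snd (ps!i)" using assms nth_mem by blast
  ultimately show ?thesis using assms(1) by auto
qed

lemma Zf_Nil [simp]: "Zf [] e = 1"
  by (simp add: Zf_def)

lemma w_deriv:
  assumes "1 \<le> n"
  shows "((\<lambda>e. w p e n) has_field_derivative of_nat (snd p) * w (fst p - 1, snd p) e n) (at e)"
proof -
  have nz: "(of_nat n :: complex) \<noteq> 0" using assms by simp
  have "((\<lambda>e. w p e n) has_field_derivative
          exp (e * of_nat (n * snd p)) * of_nat (n * snd p) * (of_nat n) powi (- fst p)) (at e)"
    unfolding w_def by (auto intro!: derivative_eq_intros)
  also have "exp (e * of_nat (n * snd p)) * of_nat (n * snd p) * (of_nat n) powi (- fst p)
      = of_nat (snd p) * w (fst p - 1, snd p) e n"
  proof -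
    have "(of_nat n :: complex) powi (- (fst p - 1)) = of_nat n powi (- fst p + 1)" by simp
    also have "\<dots> = of_nat n powi (- fst p) * of_nat n powi 1"
      by (rule power_int_add) (use nz in auto)
    finally have "(of_nat n :: complex) powi (- (fst p - 1)) = of_nat n powi (- fst p) * of_nat n"
      by simp
    thus ?thesis by (simp add: w_def mult_ac)
  qed
  finally show ?thesis .
qed

lemma T_deriv:
  "((\<lambda>e. T ps e b) has_field_derivative (\<Sum>i<length ps. of_nat (snd (ps!i)) * T (dec i ps) e b)) (at e)"
proof (induction ps arbitrary: b)
  case Nil then show ?case by simp
next
  case (Cons p ps)
  define D where "D n = (\<Sum>i<length ps. of_nat (snd (ps!i)) * T (dec i ps) e n)" for n
  have "((\<lambda>e. \<Sum>n\<in>{1..<b}. w p e n * T ps e n) has_field_derivative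
      (\<Sum>n\<in>{1..<b}. (of_nat (snd p) * w (fst p - 1, snd p) e n) * T ps e n + D n * w p e n)) (at e)"
  proof (rule DERIV_sum)
    fix n assume "n \<in> {1..<b}"
    thus "((\<lambda>e. w p e n * T ps e n) has_field_derivative
        (of_nat (snd p) * w (fst p - 1, snd p) e n) * T ps e n + D n * w p e n) (at e)"
      unfolding D_def by (intro DERIV_mult w_deriv Cons.IH) auto
  qed
  also have "(\<Sum>n\<in>{1..<b}. (of_nat (snd p) * w (fst p - 1, snd p) e n) * T ps e n + D n * w p e n)
    = (\<Sum>i<length (p # ps). of_nat (snd ((p # ps) ! i)) * T (dec i (p # ps)) e b)"
  proof -
    have "(\<Sum>i<length (p # ps). of_nat (snd ((p # ps) ! i)) * T (dec i (p # ps)) e b)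
        = of_nat (snd p) * T ((fst p - 1, snd p) # ps) e b
          + (\<Sum>i<length ps. of_nat (snd (ps ! i)) * T (p # dec i ps) e b)"
      unfolding length_Cons sum.lessThan_Suc_shift by simp
    also have "(\<Sum>i<length ps. of_nat (snd (ps ! i)) * T (p # dec i ps) e b)
        = (\<Sum>n\<in>{1..<b}. D n * w p e n)"
      by (simp add: D_def sum_distrib_left sum_distrib_right mult_ac) (rule sum.swap)
    also have "of_nat (snd p) * T ((fst p - 1, snd p) # ps) e b
        = (\<Sum>n\<in>{1..<b}. (of_nat (snd p) * w (fst p - 1, snd p) e n) * T ps e n)"
      by (simp add: sum_distrib_left mult_ac)
    finally show ?thesis by (simp add: sum.distrib)
  qed
  finally show ?case by simp
qed

definition Zt :: "(int \<times> nat) list \<Rightarrow> complex \<Rightarrow> nat \<Rightarrow> complex" where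
  "Zt sr e n = w (hd sr) e (Suc n) * T (tl sr) e (Suc n)"

lemma Zt_eq_diff:
  assumes "sr \<noteq> []"
  shows "Zt sr e n = T sr e (Suc (Suc n)) - T sr e (Suc n)"
proof -
  obtain p ps where sr: "sr = p # ps" using assms by (cases sr) auto
  show ?thesis unfolding sr T_Cons_Suc by (simp add: Zt_def)
qed

lemma Zf_sums':
  assumes "Re e < 0" "\<forall>q\<in>set sr. 0 < snd q" "sr \<noteq> []"
  shows "(\<lambda>n. Zt sr e n) sums Zf sr e"
proof -
  obtain p ps where sr: "sr = p # ps" using assms by (cases sr) auto
  show ?thesis using Zf_sums[of e p ps] assms unfolding sr Zt_def by simp
qed

lemma Zf_deriv:
  assumes "Re e < 0" "\<forall>q\<in>set sr. 0 < snd q"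
  shows "((Zf sr) has_field_derivative (\<Sum>i<length sr. of_nat (snd (sr!i)) * Zf (dec i sr) e)) (at e)"
proof (cases "sr = []")
  case True
  have "Zf sr = (\<lambda>_. 1)" using True by (simp add: fun_eq_iff)
  thus ?thesis using True by simp
next
  case ne: False
  define c where "c = Re e / 2"
  have c: "c < 0" "Re e < c" using assms by (auto simp: c_def)
  define S where "S = {z. Re z < c}"
  have S: "convex S" "open S" "e \<in> S"
    using c by (auto simp: S_def convex_halfspace_Re_lt open_halfspace_Re_lt)
  define f' where "f' n z = (\<Sum>i<length sr. of_nat (snd (sr!i)) * Zt (dec i sr) z n)" for n z
  have decne: "dec i sr \<noteq> []" for i using ne by (metis length_dec length_0_conv)
  have decpos: "\<forall>q\<in>set (dec i sr). 0 < snd q" if "i < length sr" for i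
    using dec_pos[OF assms(2) that] .
  have der: "((\<lambda>z. Zt sr z n) has_field_derivative f' n z) (at z within S)" for n z
  proof -
    have eq: "(\<lambda>z. Zt sr z n) = (\<lambda>z. T sr z (Suc (Suc n)) - T sr z (Suc n))"
      using Zt_eq_diff[OF ne] by (simp add: fun_eq_iff)
    have eq2: "f' n z = (\<Sum>i<length sr. of_nat (snd (sr!i)) * T (dec i sr) z (Suc (Suc n)))
        - (\<Sum>i<length sr. of_nat (snd (sr!i)) * T (dec i sr) z (Suc n))"
      by (simp only: f'_def Zt_eq_diff[OF decne] right_diff_distrib sum_subtractf)
    show ?thesis
      by (rule has_field_derivative_at_within) (unfold eq eq2, intro DERIV_diff T_deriv)
  qed
  define B where "B i n = real (Suc n) ^ (nat \<bar>fst (hd (dec i sr))\<bar> + Kb (tl (dec i sr))) * exp c ^ Suc n" for i n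
  define M where "M n = (\<Sum>i<length sr. real (snd (sr!i)) * B i n)" for n
  have unif: "uniformly_convergent_on S (\<lambda>n z. \<Sum>i<n. f' i z)"
  proof (rule Weierstrass_m_test')
    fix n z assume z: "z \<in> S"
    have "norm (f' n z) \<le> (\<Sum>i<length sr. norm (of_nat (snd (sr!i)) * Zt (dec i sr) z n))"
      unfolding f'_def by (rule norm_sum)
    also have "\<dots> \<le> M n" unfolding M_def
    proof (rule sum_mono)
      fix i assume i: "i \<in> {..<length sr}"
      have "hd (dec i sr) \<in> set (dec i sr)" using decne by simp
      hence "0 < snd (hd (dec i sr))" using decpos i by auto
      hence "norm (Zt (dec i sr) z n) \<le> B i n"
        unfolding Zt_def B_def using z c by (intro Zterm_bound) (auto simp: S_def)
      thus "norm (of_nat (snd (sr!i)) * Zt (dec i sr) z n) \<le> real (snd (sr!i)) * B i n"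
        by (simp add: norm_mult mult_left_mono)
    qed
    finally show "norm (f' n z) \<le> M n" .
  next
    show "summable M" unfolding M_def B_def
      by (intro summable_sum summable_mult summable_poly_geom_Suc c)
  qed
  have sm: "summable (\<lambda>n. Zt sr e n)"
    using Zf_sums'[OF assms ne] by (simp add: sums_iff)
  have D: "((\<lambda>x. \<Sum>n. Zt sr x n) has_field_derivative (\<Sum>n. f' n e)) (at e)"
    using has_field_derivative_series'(2)[OF S(1) der unif S(3) sm] S by (simp add: interior_open)
  have val: "(\<Sum>n. f' n e) = (\<Sum>i<length sr. of_nat (snd (sr!i)) * Zf (dec i sr) e)"
  proof -
    have s: "(\<lambda>n. Zt (dec i sr) e n) sums Zf (dec i sr) e" if "i < length sr" for i
      using Zf_sums'[OF assms(1) decpos[OF that] decne] .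
    have "(\<lambda>n. f' n e) sums (\<Sum>i<length sr. of_nat (snd (sr!i)) * Zf (dec i sr) e)"
      unfolding f'_def by (intro sums_sum sums_mult s) auto
    thus ?thesis by (simp add: sums_iff)
  qed
  have ev: "eventually (\<lambda>x. (\<Sum>n. Zt sr x n) = Zf sr x) (nhds e)"
  proof -
    have "eventually (\<lambda>x. x \<in> S) (nhds e)" using S by (intro eventually_nhds_in_open) auto
    thus ?thesis
    proof eventually_elim
      case (elim x)
      hence "Re x < 0" using c by (simp add: S_def)
      thus ?case using Zf_sums'[OF _ assms(2) ne] by (simp add: sums_iff)
    qed
  qed
  have "((Zf sr) has_field_derivative (\<Sum>n. f' n e)) (at e)"
    using D DERIV_cong_ev[OF refl ev refl] by blast
  thus ?thesis using val by simp
qed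


definition Bset :: "nat \<Rightarrow> nat \<Rightarrow> nat list set" where
  "Bset k N = {l \<in> mz_index k. \<forall>x\<in>set l. x < N}"

lemma finite_Bset: "finite (Bset k N)"
proof (rule finite_subset)
  show "Bset k N \<subseteq> {xs. set xs \<subseteq> {..<N} \<and> length xs = k}"
    by (auto simp: Bset_def mz_index_def)
  show "finite {xs. set xs \<subseteq> {..<N} \<and> length xs = k}"
    by (rule finite_lists_length_eq) simp
qed

lemma Bset_0: "Bset 0 N = {[]}"
  by (auto simp: Bset_def mz_index_def)

lemma Bset_Suc: "Bset (Suc k) N = (\<lambda>(n,l). n # l) ` (SIGMA n:{1..<N}. Bset k n)"
proof (intro equalityI subsetI)
  fix l assume "l \<in> Bset (Suc k) N"
  then obtain n l' where l: "l = n # l'" "length l' = k" "\<forall>y\<in>set l'. y < n" "sorted_wrt (>) l'"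
     "0 < n" "\<forall>x\<in>set l'. 0 < x" "n < N"
    by (auto simp: Bset_def mz_index_def length_Suc_conv)
  hence "(n, l') \<in> (SIGMA n:{1..<N}. Bset k n)"
    by (auto simp: Bset_def mz_index_def)
  thus "l \<in> (\<lambda>(n,l). n # l) ` (SIGMA n:{1..<N}. Bset k n)" using l(1) by force
next
  fix l assume "l \<in> (\<lambda>(n,l). n # l) ` (SIGMA n:{1..<N}. Bset k n)"
  then obtain n l' where l: "l = n # l'" "n \<in> {1..<N}" "l' \<in> Bset k n" by auto
  thus "l \<in> Bset (Suc k) N"
    by (auto simp: Bset_def mz_index_def)
qed

lemma sum_Bset_Suc:
  "(\<Sum>l\<in>Bset (Suc k) N. f l) = (\<Sum>n\<in>{1..<N}. \<Sum>l\<in>Bset k n. f (n # l))"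
proof -
  have inj: "inj_on (\<lambda>(n,l). n # l) (SIGMA n:{1..<N}. Bset k n)"
    by (auto simp: inj_on_def)
  have "(\<Sum>l\<in>Bset (Suc k) N. f l) = (\<Sum>x\<in>(SIGMA n:{1..<N}. Bset k n). f ((\<lambda>(n,l). n # l) x))"
    unfolding Bset_Suc by (subst sum.reindex[OF inj]) (simp add: o_def)
  also have "\<dots> = (\<Sum>(n,l)\<in>(SIGMA n:{1..<N}. Bset k n). f (n # l))"
    by (simp add: case_prod_beta)
  also have "\<dots> = (\<Sum>n\<in>{1..<N}. \<Sum>l\<in>Bset k n. f (n # l))"
    by (rule sum.Sigma[symmetric]) (auto simp: finite_Bset)
  finally show ?thesis .
qed

definition Pt :: "(int \<times> nat) list \<Rightarrow> complex \<Rightarrow> nat list \<Rightarrow> complex" where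
  "Pt sr e l = (\<Prod>i<length sr. w (sr!i) e (l!i))"

lemma Pt_Cons: "Pt (p # ps) e (n # l) = w p e n * Pt ps e l"
  unfolding Pt_def length_Cons prod.lessThan_Suc_shift by simp

lemma FIN: "(\<Sum>l\<in>Bset (length sr) N. Pt sr e l) = T sr e N"
proof (induction sr arbitrary: N)
  case Nil then show ?case by (simp add: Bset_0 Pt_def)
next
  case (Cons p ps)
  show ?case
    by (simp only: length_Cons sum_Bset_Suc Pt_Cons T.simps sum_distrib_left[symmetric] Cons.IH)
qed

lemma sum_from1: "(\<Sum>n\<in>{1..<N}. g n) = (\<Sum>m<N-1. g (Suc m))"
proof (cases N)
  case 0 then show ?thesis by simp
next
  case (Suc b) then show ?thesis using sum_shift1[of g b] by (simp only: diff_Suc_1)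
qed

lemma NB:
  assumes "Re e \<le> 0"
  shows "(\<Sum>l\<in>Bset (length sr) N. norm (Pt sr e l)) \<le> real N ^ Kb sr"
proof (induction sr arbitrary: N)
  case Nil then show ?case by (simp add: Bset_0 Pt_def)
next
  case (Cons p ps)
  have "(\<Sum>l\<in>Bset (length (p#ps)) N. norm (Pt (p#ps) e l))
      = (\<Sum>n\<in>{1..<N}. norm (w p e n) * (\<Sum>l\<in>Bset (length ps) n. norm (Pt ps e l)))"
    by (simp only: length_Cons sum_Bset_Suc Pt_Cons norm_mult sum_distrib_left)
  also have "\<dots> \<le> (\<Sum>n\<in>{1..<N}. real N ^ (nat \<bar>fst p\<bar> + Kb ps))"
  proof (intro sum_mono)
    fix n assume n: "n \<in> {1..<N}"
    have "norm (w p e n) * (\<Sum>l\<in>Bset (length ps) n. norm (Pt ps e l)) \<le> real n ^ nat \<bar>fst p\<bar> * real n ^ Kb ps"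
      using n assms Cons.IH[of n] norm_w_le[of e n p] by (intro mult_mono) (auto intro: sum_nonneg)
    also have "\<dots> = real n ^ (nat \<bar>fst p\<bar> + Kb ps)" by (simp add: power_add)
    also have "\<dots> \<le> real N ^ (nat \<bar>fst p\<bar> + Kb ps)" using n by (intro power_mono) auto
    finally show "norm (w p e n) * (\<Sum>l\<in>Bset (length ps) n. norm (Pt ps e l)) \<le> real N ^ (nat \<bar>fst p\<bar> + Kb ps)" .
  qed
  also have "\<dots> = real (N - 1) * real N ^ (nat \<bar>fst p\<bar> + Kb ps)" by simp
  also have "\<dots> \<le> real N * real N ^ (nat \<bar>fst p\<bar> + Kb ps)"
    by (intro mult_right_mono) auto
  also have "\<dots> = real N ^ Kb (p # ps)" by simp
  finally show ?case .
qed

lemma NB2: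
  assumes "Re e < 0" "\<forall>q\<in>set sr. 0 < snd q"
  shows "\<exists>C. \<forall>N. (\<Sum>l\<in>Bset (length sr) N. norm (Pt sr e l)) \<le> C"
proof (cases sr)
  case Nil then show ?thesis by (auto simp: Bset_0 Pt_def)
next
  case (Cons p ps)
  have p: "0 < snd p" using assms Cons by auto
  define M where "M m = real (Suc m) ^ (nat \<bar>fst p\<bar> + Kb ps) * exp (Re e) ^ Suc m" for m
  have sM: "summable M" unfolding M_def by (rule summable_poly_geom_Suc) (use assms in auto)
  have gM: "norm (w p e (Suc m)) * real (Suc m) ^ Kb ps \<le> M m" for m
  proof -
    have a: "exp (Re e * real (Suc m * snd p)) \<le> exp (Re e) ^ Suc m"
      using exp_bound_w[of e "Re e" "snd p" m] assms p by simp
    have b: "real (Suc m) powi (- fst p) \<le> real (Suc m) ^ nat \<bar>fst p\<bar>"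
      using powi_le_pow[of "real (Suc m)" "- fst p"] by simp
    have "norm (w p e (Suc m)) \<le> exp (Re e) ^ Suc m * real (Suc m) ^ nat \<bar>fst p\<bar>"
      unfolding norm_w by (rule mult_mono[OF a b]) auto
    hence "norm (w p e (Suc m)) * real (Suc m) ^ Kb ps \<le> (exp (Re e) ^ Suc m * real (Suc m) ^ nat \<bar>fst p\<bar>) * real (Suc m) ^ Kb ps"
      by (rule mult_right_mono) simp
    thus ?thesis by (simp add: M_def power_add mult_ac)
  qed
  have M0: "0 \<le> M m" for m unfolding M_def by simp
  have "(\<Sum>l\<in>Bset (length sr) N. norm (Pt sr e l)) \<le> suminf M" for N
  proof -
    have "(\<Sum>l\<in>Bset (length sr) N. norm (Pt sr e l))
      = (\<Sum>n\<in>{1..<N}. norm (w p e n) * (\<Sum>l\<in>Bset (length ps) n. norm (Pt ps e l)))"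
      unfolding Cons by (simp only: length_Cons sum_Bset_Suc Pt_Cons norm_mult sum_distrib_left)
    also have "\<dots> \<le> (\<Sum>n\<in>{1..<N}. norm (w p e n) * real n ^ Kb ps)"
      by (intro sum_mono mult_left_mono NB) (use assms in auto)
    also have "\<dots> = (\<Sum>m<N-1. norm (w p e (Suc m)) * real (Suc m) ^ Kb ps)"
      by (rule sum_from1)
    also have "\<dots> \<le> (\<Sum>m<N-1. M m)" by (intro sum_mono gM)
    also have "\<dots> \<le> suminf M" by (intro sum_le_suminf sM) (auto intro: M0)
    finally show ?thesis .
  qed
  thus ?thesis by blast
qed

lemma Pt_has_sum:
  assumes "Re e < 0" "\<forall>q\<in>set sr. 0 < snd q"
  shows "((Pt sr e) has_sum Zf sr e) (mz_index (length sr))"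
proof -
  define A where "A = mz_index (length sr)"
  obtain C where C: "\<And>N. (\<Sum>l\<in>Bset (length sr) N. norm (Pt sr e l)) \<le> C"
    using NB2[OF assms] by blast
  have cover: "\<exists>N. F \<subseteq> Bset (length sr) N" if "finite F" "F \<subseteq> A" for F
  proof -
    have "finite (\<Union>l\<in>F. set l)" using that by auto
    then obtain N where N: "(\<Union>l\<in>F. set l) \<subseteq> {..<N}" using finite_nat_bounded by blast
    have "F \<subseteq> Bset (length sr) N"
    proof
      fix l assume l: "l \<in> F"
      hence "l \<in> A" using that by blast
      moreover have "\<forall>x\<in>set l. x < N" using N l by blast
      ultimately show "l \<in> Bset (length sr) N" unfolding Bset_def A_def by blast
    qed
    thus ?thesis by blast
  qed
  have "(\<lambda>l. norm (Pt sr e l)) summable_on A"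
  proof (rule nonneg_bdd_above_summable_on)
    show "bdd_above (sum (\<lambda>l. norm (Pt sr e l)) ` {F. F \<subseteq> A \<and> finite F})"
    proof (rule bdd_aboveI2)
      fix F assume F: "F \<in> {F. F \<subseteq> A \<and> finite F}"
      then obtain N where N: "F \<subseteq> Bset (length sr) N" using cover by blast
      have "sum (\<lambda>l. norm (Pt sr e l)) F \<le> sum (\<lambda>l. norm (Pt sr e l)) (Bset (length sr) N)"
        by (intro sum_mono2 finite_Bset N) auto
      also have "\<dots> \<le> C" by (rule C)
      finally show "sum (\<lambda>l. norm (Pt sr e l)) F \<le> C" .
    qed
  qed simp
  hence "(Pt sr e) summable_on A" by (rule abs_summable_summable)
  hence hs: "((Pt sr e) has_sum infsum (Pt sr e) A) A" by (rule has_sum_infsum)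
  have fl: "filterlim (\<lambda>N. Bset (length sr) N) (finite_subsets_at_top A) sequentially"
    unfolding filterlim_finite_subsets_at_top
  proof (intro allI impI)
    fix X assume X: "finite X \<and> X \<subseteq> A"
    then obtain N0 where N0: "X \<subseteq> Bset (length sr) N0" using cover by blast
    have "eventually (\<lambda>N. N \<ge> N0) sequentially" by (rule eventually_ge_at_top)
    thus "eventually (\<lambda>N. finite (Bset (length sr) N) \<and> X \<subseteq> Bset (length sr) N \<and> Bset (length sr) N \<subseteq> A) sequentially"
    proof eventually_elim
      case (elim N)
      have "Bset (length sr) N0 \<subseteq> Bset (length sr) N" using elim unfolding Bset_def by force
      hence "X \<subseteq> Bset (length sr) N" using N0 by blast
      moreover have "Bset (length sr) N \<subseteq> A" unfolding Bset_def A_def by blast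
      ultimately show ?case using finite_Bset by blast
    qed
  qed
  have "(\<lambda>N. sum (Pt sr e) (Bset (length sr) N)) \<longlonglongrightarrow> infsum (Pt sr e) A"
    by (rule filterlim_compose[OF hs[unfolded has_sum_def] fl])
  hence "(\<lambda>N. T sr e N) \<longlonglongrightarrow> infsum (Pt sr e) A" by (simp add: FIN)
  moreover have "(\<lambda>N. T sr e N) \<longlonglongrightarrow> Zf sr e" by (rule T_lim[OF assms])
  ultimately have "infsum (Pt sr e) A = Zf sr e" by (rule LIMSEQ_unique)
  thus ?thesis using hs by (simp add: A_def)
qed

lemma Zfun_eq:
  assumes "length r = length s" "\<forall>x\<in>set r. 0 < x" "Re e < 0"
  shows "Zfun s r e = Zf (zip s r) e"
proof -
  have pos: "\<forall>q\<in>set (zip s r). 0 < snd q" using assms by (auto dest: set_zip_rightD)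
  have "mz_term s r e = Pt (zip s r) e"
    using assms(1) by (auto simp: fun_eq_iff mz_term_def Pt_def w_def)
  hence "Zfun s r e = infsum (Pt (zip s r) e) (mz_index (length (zip s r)))"
    using assms(1) by (simp add: Zfun_def)
  also have "\<dots> = Zf (zip s r) e"
    using Pt_has_sum[OF assms(3) pos] by (rule infsumI)
  finally show ?thesis .
qed


definition Dm :: "real \<Rightarrow> complex set" where
  "Dm \<rho> = {z. Re z < 0 \<and> norm z < \<rho>}"

definition lrep :: "real \<Rightarrow> nat \<Rightarrow> (nat \<Rightarrow> complex fls) \<Rightarrow> (complex \<Rightarrow> complex) \<Rightarrow> bool" where
  "lrep \<rho> M F f \<longleftrightarrow> 0 < \<rho> \<and> (\<forall>j\<le>M. ereal \<rho> \<le> fls_conv_radius (F j)) \<and>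
     (\<forall>z\<in>Dm \<rho>. f z = (\<Sum>j\<le>M. eval_fls (F j) z * Ln (-z) ^ j))"

definition inL :: "(complex \<Rightarrow> complex) \<Rightarrow> bool" where
  "inL f \<longleftrightarrow> (\<exists>\<rho> M F. lrep \<rho> M F f)"

definition inL0 :: "(complex \<Rightarrow> complex) \<Rightarrow> bool" where
  "inL0 f \<longleftrightarrow> (\<exists>\<rho> F. 0 < \<rho> \<and> ereal \<rho> \<le> fls_conv_radius F \<and> (\<forall>z\<in>Dm \<rho>. f z = eval_fls F z))"

lemma ereal_le_trans': "a \<le> b \<Longrightarrow> ereal b \<le> R \<Longrightarrow> ereal a \<le> R"
  by (meson ereal_less_eq(3) order_trans)

lemma ereal_lt_trans': "a < b \<Longrightarrow> ereal b \<le> R \<Longrightarrow> ereal a < R"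
  using less_le_trans[of "ereal a" "ereal b" R] by simp

lemma ereal_min_le: "ereal a \<le> R1 \<Longrightarrow> ereal b \<le> R2 \<Longrightarrow> min R1 R2 \<le> R \<Longrightarrow> ereal (min a b) \<le> R"
  by (smt (verit, ccfv_SIG) dual_order.trans ereal_less_eq(3) min.absorb_iff1 min_def)

lemma Dm_mono: "\<rho>' \<le> \<rho> \<Longrightarrow> Dm \<rho>' \<subseteq> Dm \<rho>"
  by (auto simp: Dm_def)

lemma Dm_nz: "z \<in> Dm \<rho> \<Longrightarrow> z \<noteq> 0"
  by (auto simp: Dm_def)

lemma Dm_norm: "z \<in> Dm \<rho> \<Longrightarrow> ereal \<rho> \<le> R \<Longrightarrow> ereal (norm z) < R"
  unfolding Dm_def by (auto intro: ereal_lt_trans')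

lemma Dm_open: "open (Dm \<rho>)"
proof -
  have "Dm \<rho> = {z. Re z < 0} \<inter> ball 0 \<rho>" by (auto simp: Dm_def)
  thus ?thesis by (simp add: open_Int open_halfspace_Re_lt)
qed

lemma Dm_convex: "convex (Dm \<rho>)"
proof -
  have "Dm \<rho> = {z. Re z < 0} \<inter> ball 0 \<rho>" by (auto simp: Dm_def)
  thus ?thesis by (simp add: convex_Int convex_halfspace_Re_lt)
qed

lemma lrep_mono:
  assumes "lrep \<rho> M F f" "0 < \<rho>'" "\<rho>' \<le> \<rho>"
  shows "lrep \<rho>' M F f"
  using assms Dm_mono[OF assms(3)] unfolding lrep_def
  by (meson ereal_less_eq(3) order_trans subsetD)

lemma inL_cong:
  assumes "inL f" "0 < \<delta>" "\<And>z. z \<in> Dm \<delta> \<Longrightarrow> g z = f z"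
  shows "inL g"
proof -
  obtain \<rho> M F where r: "lrep \<rho> M F f" using assms by (auto simp: inL_def)
  have "lrep (min \<rho> \<delta>) M F f" using r assms(2) by (intro lrep_mono[OF r]) (auto simp: lrep_def)
  hence "lrep (min \<rho> \<delta>) M F g"
    using assms(3) Dm_mono[of "min \<rho> \<delta>" \<delta>] by (auto simp: lrep_def)
  thus ?thesis by (auto simp: inL_def)
qed

lemma inL0_cong:
  assumes "inL0 f" "0 < \<delta>" "\<And>z. z \<in> Dm \<delta> \<Longrightarrow> g z = f z"
  shows "inL0 g"
proof -
  obtain \<rho> F where r: "0 < \<rho>" "ereal \<rho> \<le> fls_conv_radius F" "\<forall>z\<in>Dm \<rho>. f z = eval_fls F z"
    using assms by (auto simp: inL0_def)
  have "0 < min \<rho> \<delta>" "ereal (min \<rho> \<delta>) \<le> fls_conv_radius F"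
    using r assms(2) by (auto intro: order_trans[OF _ r(2)])
  moreover have "\<forall>z\<in>Dm (min \<rho> \<delta>). g z = eval_fls F z"
  proof
    fix z assume z: "z \<in> Dm (min \<rho> \<delta>)"
    hence "z \<in> Dm \<delta>" "z \<in> Dm \<rho>" using Dm_mono[of "min \<rho> \<delta>" \<delta>] Dm_mono[of "min \<rho> \<delta>" \<rho>] by auto
    thus "g z = eval_fls F z" using r(3) assms(3) by simp
  qed
  ultimately show ?thesis unfolding inL0_def by blast
qed

lemma inL0_imp_inL:
  assumes "inL0 f" shows "inL f"
proof -
  obtain \<rho> F where r: "0 < \<rho>" "ereal \<rho> \<le> fls_conv_radius F" "\<forall>z\<in>Dm \<rho>. f z = eval_fls F z"
    using assms by (auto simp: inL0_def)
  have "lrep \<rho> 0 (\<lambda>_. F) f" using r by (auto simp: lrep_def)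
  thus ?thesis by (auto simp: inL_def)
qed

lemma laurent_imp_inL0:
  assumes "f has_laurent_expansion F"
  shows "inL0 f"
proof -
  have R: "0 < fls_conv_radius F" and ev: "eventually (\<lambda>z. eval_fls F z = f z) (at 0)"
    using assms by (auto simp: has_laurent_expansion_def)
  obtain d where d: "0 < d" "\<And>z. z \<noteq> 0 \<Longrightarrow> dist z 0 < d \<Longrightarrow> eval_fls F z = f z"
    using ev unfolding eventually_at by blast
  obtain r where r: "0 < ereal r" "ereal r < fls_conv_radius F" using ereal_dense2[OF R] by blast
  define \<rho> where "\<rho> = min d r"
  have "0 < \<rho>" using d r by (auto simp: \<rho>_def)
  moreover have "ereal \<rho> \<le> fls_conv_radius F" using r
    by (intro ereal_le_trans'[of \<rho> r]) (auto simp: \<rho>_def)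
  moreover have "\<forall>z\<in>Dm \<rho>. f z = eval_fls F z"
  proof
    fix z assume z: "z \<in> Dm \<rho>"
    hence "z \<noteq> 0" "dist z 0 < d" by (auto simp: Dm_def \<rho>_def dist_norm)
    thus "f z = eval_fls F z" using d(2)[of z] by simp
  qed
  ultimately show ?thesis by (auto simp: inL0_def)
qed

lemma inL0_const: "inL0 (\<lambda>_. c)"
  by (rule laurent_imp_inL0[OF has_laurent_expansion_const])

lemma inL0_add:
  assumes "inL0 f" "inL0 g" shows "inL0 (\<lambda>z. f z + g z)"
proof -
  obtain \<rho>1 F where r1: "0 < \<rho>1" "ereal \<rho>1 \<le> fls_conv_radius F" "\<forall>z\<in>Dm \<rho>1. f z = eval_fls F z"
    using assms by (auto simp: inL0_def)
  obtain \<rho>2 G where r2: "0 < \<rho>2" "ereal \<rho>2 \<le> fls_conv_radius G" "\<forall>z\<in>Dm \<rho>2. g z = eval_fls G z"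
    using assms by (auto simp: inL0_def)
  define \<rho> where "\<rho> = min \<rho>1 \<rho>2"
  have "ereal \<rho> \<le> fls_conv_radius (F + G)"
    unfolding \<rho>_def by (rule ereal_min_le[OF r1(2) r2(2) fls_conv_radius_add])
  moreover have "\<forall>z\<in>Dm \<rho>. f z + g z = eval_fls (F + G) z"
  proof
    fix z assume z: "z \<in> Dm \<rho>"
    hence z1: "z \<in> Dm \<rho>1" and z2: "z \<in> Dm \<rho>2" using Dm_mono[of \<rho> \<rho>1] Dm_mono[of \<rho> \<rho>2] by (auto simp: \<rho>_def)
    show "f z + g z = eval_fls (F + G) z"
      using r1 r2 z1 z2 eval_fls_add[OF Dm_norm[OF z1 r1(2)] Dm_norm[OF z2 r2(2)] Dm_nz[OF z]] by simp
  qed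
  moreover have "0 < \<rho>" using r1 r2 by (simp add: \<rho>_def)
  ultimately show ?thesis unfolding inL0_def by blast
qed

lemma inL0_mult:
  assumes "inL0 f" "inL0 g" shows "inL0 (\<lambda>z. f z * g z)"
proof -
  obtain \<rho>1 F where r1: "0 < \<rho>1" "ereal \<rho>1 \<le> fls_conv_radius F" "\<forall>z\<in>Dm \<rho>1. f z = eval_fls F z"
    using assms by (auto simp: inL0_def)
  obtain \<rho>2 G where r2: "0 < \<rho>2" "ereal \<rho>2 \<le> fls_conv_radius G" "\<forall>z\<in>Dm \<rho>2. g z = eval_fls G z"
    using assms by (auto simp: inL0_def)
  define \<rho> where "\<rho> = min \<rho>1 \<rho>2"
  have "ereal \<rho> \<le> fls_conv_radius (F * G)"
    unfolding \<rho>_def by (rule ereal_min_le[OF r1(2) r2(2) fls_conv_radius_mult])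
  moreover have "\<forall>z\<in>Dm \<rho>. f z * g z = eval_fls (F * G) z"
  proof
    fix z assume z: "z \<in> Dm \<rho>"
    hence z1: "z \<in> Dm \<rho>1" and z2: "z \<in> Dm \<rho>2" using Dm_mono[of \<rho> \<rho>1] Dm_mono[of \<rho> \<rho>2] by (auto simp: \<rho>_def)
    show "f z * g z = eval_fls (F * G) z"
      using r1 r2 z1 z2 eval_fls_mult[OF Dm_norm[OF z1 r1(2)] Dm_norm[OF z2 r2(2)] Dm_nz[OF z]] by simp
  qed
  moreover have "0 < \<rho>" using r1 r2 by (simp add: \<rho>_def)
  ultimately show ?thesis unfolding inL0_def by blast
qed

lemma sum_pad: "(M1::nat) \<le> M \<Longrightarrow> (\<Sum>j\<le>M. if j \<le> M1 then X j else 0) = (\<Sum>j\<le>M1. X j)"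
proof -
  assume "M1 \<le> M"
  hence "{j \<in> {..M}. j \<le> M1} = {..M1}" by (auto intro: le_trans)
  moreover have "(\<Sum>j\<le>M. if j \<le> M1 then X j else 0) = sum X {j \<in> {..M}. j \<le> M1}"
    by (rule sum.inter_filter[symmetric]) simp
  ultimately show ?thesis by simp
qed

lemma lrep_pad:
  assumes "lrep \<rho> M F f" "M \<le> M'"
  shows "lrep \<rho> M' (\<lambda>j. if j \<le> M then F j else 0) f"
proof -
  have "(\<Sum>j\<le>M'. eval_fls (if j \<le> M then F j else 0) z * Ln (-z) ^ j)
      = (\<Sum>j\<le>M'. if j \<le> M then eval_fls (F j) z * Ln (-z) ^ j else 0)" for z
    by (intro sum.cong) auto
  moreover have "(\<Sum>j\<le>M'. if j \<le> M then eval_fls (F j) z * Ln (-z) ^ j else 0)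
      = (\<Sum>j\<le>M. eval_fls (F j) z * Ln (-z) ^ j)" for z
    using sum_pad[OF assms(2), of "\<lambda>j. eval_fls (F j) z * Ln (-z) ^ j"] by simp
  ultimately show ?thesis using assms unfolding lrep_def by auto
qed

lemma inL_add:
  assumes "inL f" "inL g" shows "inL (\<lambda>z. f z + g z)"
proof -
  obtain \<rho>1 M1 F1 where r1: "lrep \<rho>1 M1 F1 f" using assms by (auto simp: inL_def)
  obtain \<rho>2 M2 F2 where r2: "lrep \<rho>2 M2 F2 g" using assms by (auto simp: inL_def)
  define \<rho> where "\<rho> = min \<rho>1 \<rho>2"
  define M where "M = M1 + M2"
  define G1 where "G1 = (\<lambda>j. if j \<le> M1 then F1 j else 0)"
  define G2 where "G2 = (\<lambda>j. if j \<le> M2 then F2 j else 0)"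
  have q1: "lrep \<rho> M G1 f" unfolding G1_def M_def
    by (rule lrep_mono[OF lrep_pad[OF r1]]) (use r1 r2 in \<open>auto simp: \<rho>_def lrep_def\<close>)
  have q2: "lrep \<rho> M G2 g" unfolding G2_def M_def
    by (rule lrep_mono[OF lrep_pad[OF r2]]) (use r1 r2 in \<open>auto simp: \<rho>_def lrep_def\<close>)
  have "lrep \<rho> M (\<lambda>j. G1 j + G2 j) (\<lambda>z. f z + g z)"
    unfolding lrep_def
  proof (intro conjI allI impI ballI)
    show "0 < \<rho>" using q1 by (simp add: lrep_def)
    fix j assume "j \<le> M"
    hence "ereal (min \<rho> \<rho>) \<le> fls_conv_radius (G1 j + G2 j)"
      using q1 q2 by (intro ereal_min_le[OF _ _ fls_conv_radius_add]) (auto simp: lrep_def)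
    thus "ereal \<rho> \<le> fls_conv_radius (G1 j + G2 j)" by simp
  next
    fix z assume z: "z \<in> Dm \<rho>"
    have "f z + g z = (\<Sum>j\<le>M. eval_fls (G1 j) z * Ln (-z) ^ j) + (\<Sum>j\<le>M. eval_fls (G2 j) z * Ln (-z) ^ j)"
      using q1 q2 z by (simp add: lrep_def)
    also have "\<dots> = (\<Sum>j\<le>M. eval_fls (G1 j + G2 j) z * Ln (-z) ^ j)"
      unfolding sum.distrib[symmetric]
    proof (intro sum.cong refl)
      fix j assume "j \<in> {..M}"
      hence "eval_fls (G1 j + G2 j) z = eval_fls (G1 j) z + eval_fls (G2 j) z"
        using q1 q2 \<open>j \<in> {..M}\<close> by (intro eval_fls_add Dm_nz[OF z]) (auto simp: lrep_def intro: Dm_norm[OF z])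
      thus "eval_fls (G1 j) z * Ln (- z) ^ j + eval_fls (G2 j) z * Ln (- z) ^ j =
            eval_fls (G1 j + G2 j) z * Ln (- z) ^ j" by (simp add: algebra_simps)
    qed
    finally show "f z + g z = (\<Sum>j\<le>M. eval_fls (G1 j + G2 j) z * Ln (-z) ^ j)" .
  qed
  thus ?thesis by (auto simp: inL_def)
qed

lemma inL0_mult_inL:
  assumes "inL0 a" "inL f" shows "inL (\<lambda>z. a z * f z)"
proof -
  obtain \<rho>1 G where r1: "0 < \<rho>1" "ereal \<rho>1 \<le> fls_conv_radius G" "\<forall>z\<in>Dm \<rho>1. a z = eval_fls G z"
    using assms by (auto simp: inL0_def)
  obtain \<rho>2 M F where r2: "lrep \<rho>2 M F f" using assms by (auto simp: inL_def)
  define \<rho> where "\<rho> = min \<rho>1 \<rho>2"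
  have q2: "lrep \<rho> M F f" by (rule lrep_mono[OF r2]) (use r1 r2 in \<open>auto simp: \<rho>_def lrep_def\<close>)
  have "lrep \<rho> M (\<lambda>j. G * F j) (\<lambda>z. a z * f z)"
    unfolding lrep_def
  proof (intro conjI allI impI ballI)
    show "0 < \<rho>" using q2 by (simp add: lrep_def)
    fix j assume "j \<le> M"
    hence "ereal (min \<rho>1 \<rho>2) \<le> fls_conv_radius (G * F j)"
      using r2 r1 by (intro ereal_min_le[OF _ _ fls_conv_radius_mult]) (auto simp: lrep_def)
    thus "ereal \<rho> \<le> fls_conv_radius (G * F j)" by (simp add: \<rho>_def)
  next
    fix z assume z: "z \<in> Dm \<rho>"
    have z1: "z \<in> Dm \<rho>1" using z Dm_mono[of \<rho> \<rho>1] by (auto simp: \<rho>_def)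
    have "a z * f z = eval_fls G z * (\<Sum>j\<le>M. eval_fls (F j) z * Ln (-z) ^ j)"
      using q2 r1 z z1 by (simp add: lrep_def)
    also have "\<dots> = (\<Sum>j\<le>M. eval_fls (G * F j) z * Ln (-z) ^ j)"
      unfolding sum_distrib_left
    proof (intro sum.cong refl)
      fix j assume "j \<in> {..M}"
      hence "eval_fls (G * F j) z = eval_fls G z * eval_fls (F j) z"
        using q2 r1 \<open>j \<in> {..M}\<close> by (intro eval_fls_mult Dm_nz[OF z] Dm_norm[OF z1 r1(2)]) (auto simp: lrep_def intro: Dm_norm[OF z])
      thus "eval_fls G z * (eval_fls (F j) z * Ln (- z) ^ j) = eval_fls (G * F j) z * Ln (- z) ^ j"
        by (simp add: algebra_simps)
    qed
    finally show "a z * f z = (\<Sum>j\<le>M. eval_fls (G * F j) z * Ln (-z) ^ j)" .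
  qed
  thus ?thesis by (auto simp: inL_def)
qed

lemma inL_cmult: "inL f \<Longrightarrow> inL (\<lambda>z. c * f z)"
  using inL0_mult_inL[OF inL0_const] .

lemma inL_const: "inL (\<lambda>_. c)"
  by (rule inL0_imp_inL[OF inL0_const])

lemma inL_diff: "inL f \<Longrightarrow> inL g \<Longrightarrow> inL (\<lambda>z. f z - g z)"
  using inL_add[of f "\<lambda>z. (-1) * g z"] inL_cmult[of g "-1"] by simp

lemma inL_sum_list:
  assumes "\<And>x. x \<in> set xs \<Longrightarrow> inL (g x)"
  shows "inL (\<lambda>z. \<Sum>x\<leftarrow>xs. g x z)"
  using assms
proof (induction xs)
  case Nil then show ?case using inL_const[of 0] by simp
next
  case (Cons x xs) then show ?case by (simp add: inL_add)
qed

lemma inL_sum: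
  assumes "finite A" "\<And>x. x \<in> A \<Longrightarrow> inL (g x)"
  shows "inL (\<lambda>z. \<Sum>x\<in>A. g x z)"
  using assms
proof (induction A rule: finite_induct)
  case empty then show ?case using inL_const[of 0] by simp
next
  case (insert x A) then show ?case by (simp add: inL_add)
qed

lemma inL0_sum:
  assumes "finite A" "\<And>x. x \<in> A \<Longrightarrow> inL0 (g x)"
  shows "inL0 (\<lambda>z. \<Sum>x\<in>A. g x z)"
  using assms
proof (induction A rule: finite_induct)
  case empty then show ?case using inL0_const[of 0] by simp
next
  case (insert x A) then show ?case by (simp add: inL0_add)
qed

lemma inL_log_term:
  assumes "0 < fls_conv_radius H"
  shows "inL (\<lambda>z. eval_fls H z * Ln (-z) ^ j)"
proof -
  obtain r where r: "0 < ereal r" "ereal r < fls_conv_radius H" using ereal_dense2[OF assms] by blast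
  have "lrep r j (\<lambda>i. if i = j then H else 0) (\<lambda>z. eval_fls H z * Ln (-z) ^ j)"
    unfolding lrep_def
  proof (intro conjI allI impI ballI)
    show "0 < r" using r by simp
    fix i show "ereal r \<le> fls_conv_radius (if i = j then H else 0)" using r by auto
  next
    fix z
    have "(\<Sum>i\<le>j. eval_fls (if i = j then H else 0) z * Ln (-z) ^ i)
        = (\<Sum>i\<le>j. if i = j then eval_fls H z * Ln (-z) ^ i else 0)"
      by (intro sum.cong) auto
    also have "\<dots> = eval_fls H z * Ln (-z) ^ j" by simp
    finally show "eval_fls H z * Ln (-z) ^ j = (\<Sum>i\<le>j. eval_fls (if i = j then H else 0) z * Ln (-z) ^ i)" ..
  qed
  thus ?thesis by (auto simp: inL_def)
qed


lemma Ln_deriv: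
  assumes "Re z < 0"
  shows "((\<lambda>z. Ln (-z)) has_field_derivative inverse z) (at z)"
proof -
  have "-z \<notin> \<real>\<^sub>\<le>\<^sub>0" using assms by (simp add: complex_nonpos_Reals_iff)
  hence h: "(Ln has_field_derivative inverse (-z)) (at (-z))" by (rule has_field_derivative_Ln)
  have d2: "((\<lambda>x. - x) has_field_derivative - 1) (at z)" by (rule DERIV_minus[OF DERIV_ident])
  have "((\<lambda>z. Ln (-z)) has_field_derivative inverse (-z) * (- 1)) (at z)"
    by (rule DERIV_chain2[OF h d2])
  thus ?thesis by simp
qed

lemma Ln_pow_deriv:
  assumes "Re z < 0"
  shows "((\<lambda>z. Ln (-z) ^ n) has_field_derivative of_nat n * (inverse z * Ln (-z) ^ (n - 1))) (at z)"
  using DERIV_power[OF Ln_deriv[OF assms], of n] by simp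

lemma fls_conv_radius_integral:
  "fls_conv_radius F \<le> fls_conv_radius (fls_integral F)"
proof -
  define a where "a n = fls_nth F (int n)" for n
  define b where "b n = fls_nth (fls_integral F) (int n)" for n
  have "conv_radius a \<le> conv_radius b"
  proof (rule conv_radius_geI_ex')
    fix r :: real assume r: "0 < r" "ereal r < conv_radius a"
    have sa: "summable (\<lambda>n. norm (a n * of_real r ^ n))"
      by (rule abs_summable_in_conv_radius) (use r in simp)
    have "summable (\<lambda>m. norm (b (Suc m) * of_real r ^ Suc m))"
    proof (rule summable_comparison_test'[where N=0])
      show "summable (\<lambda>m. r * norm (a m * of_real r ^ m))" by (intro summable_mult sa)
      fix m :: nat
      have "b (Suc m) = inverse (of_nat (Suc m)) * a m"
        by (simp add: b_def a_def)
      hence "norm (norm (b (Suc m) * of_real r ^ Suc m)) = inverse (real (Suc m)) * (r * norm (a m * of_real r ^ m))"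
        using r by (simp add: norm_mult norm_power norm_inverse mult_ac norm_of_nat del: of_nat_Suc)
      also have "\<dots> \<le> 1 * (r * norm (a m * of_real r ^ m))"
      proof (intro mult_right_mono)
        show "inverse (real (Suc m)) \<le> 1" by (simp add: inverse_le_1_iff del: of_nat_Suc)
      qed (use r in auto)
      finally show "norm (norm (b (Suc m) * of_real r ^ Suc m)) \<le> r * norm (a m * of_real r ^ m)" by simp
    qed
    hence "summable (\<lambda>m. b (Suc m) * of_real r ^ Suc m)" by (rule summable_norm_cancel)
    thus "summable (\<lambda>n. b n * of_real r ^ n)" by (rule summable_Suc_iff[THEN iffD1])
  qed
  thus ?thesis by (simp add: fls_conv_radius_def fps_conv_radius_def a_def b_def)
qed

lemma inL_Ln_pow: "inL (\<lambda>z. Ln (-z) ^ j)"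
  using inL_log_term[of 1 j] by simp

lemma prim_setup:
  assumes R: "0 < fls_conv_radius F"
  obtains c H r where "0 < r" "0 < fls_conv_radius H"
    "\<And>z. z \<in> Dm r \<Longrightarrow> (eval_fls H has_field_derivative eval_fls F z - c * inverse z) (at z)"
proof -
  define c where "c = fls_nth F (-1)"
  define Xi where "Xi = fls_shift 1 (fls_const c)"
  define F0 where "F0 = F - Xi"
  define H where "H = fls_integral F0"
  have "fls_regpart Xi = 0" by (intro fps_ext) (simp add: Xi_def)
  hence RXi: "fls_conv_radius Xi = \<infinity>" by (simp add: fls_conv_radius_def)
  have RF0: "fls_conv_radius F \<le> fls_conv_radius F0"
    using fls_conv_radius_diff[of F Xi] RXi by (simp add: F0_def)
  have RH: "fls_conv_radius F \<le> fls_conv_radius H"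
    using RF0 fls_conv_radius_integral[of F0] by (simp add: H_def)
  have res: "fls_residue F0 = 0" by (simp add: F0_def Xi_def c_def)
  have dH: "fls_deriv H = F0" unfolding H_def by (rule fls_deriv_fls_integral[OF res])
  obtain r where r: "0 < ereal r" "ereal r < fls_conv_radius F" using ereal_dense2[OF R] by blast
  have r0: "0 < r" using r by simp
  have zr: "ereal (norm z) < fls_conv_radius F" "z \<noteq> 0" if "z \<in> Dm r" for z
    using that r by (auto simp: Dm_def intro: ereal_lt_trans' Dm_nz)
  have evF0: "eval_fls F0 z = eval_fls F z - c * inverse z" if "z \<in> Dm r" for z
  proof -
    have "eval_fls F0 z = eval_fls F z - eval_fls Xi z"
      unfolding F0_def using zr[OF that] RXi by (intro eval_fls_diff) auto
    also have "eval_fls Xi z = c * inverse z"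
      using zr[OF that] by (simp add: Xi_def eval_fls_shift power_int_minus)
    finally show ?thesis .
  qed
  have dHz: "(eval_fls H has_field_derivative eval_fls F z - c * inverse z) (at z)" if "z \<in> Dm r" for z
  proof -
    have "z \<in> eball 0 (fls_conv_radius H) - {0}"
      using zr[OF that] RH by (auto intro: less_le_trans)
    from has_field_derivative_eval_fls[OF this] show ?thesis by (simp add: dH evF0[OF that])
  qed
  have RH0: "0 < fls_conv_radius H" using R RH by (rule less_le_trans)
  show ?thesis by (rule that[OF r0 RH0 dHz])
qed

lemma prim:
  assumes "0 < fls_conv_radius F"
  shows "\<exists>P \<rho>. 0 < \<rho> \<and> inL P \<and> (\<forall>z\<in>Dm \<rho>. (P has_field_derivative eval_fls F z * Ln (-z) ^ j) (at z))"
  using assms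
proof (induction j arbitrary: F)
  case 0
  obtain c H r where r0: "0 < r" and RH0: "0 < fls_conv_radius H"
    and dHz: "\<And>z. z \<in> Dm r \<Longrightarrow> (eval_fls H has_field_derivative eval_fls F z - c * inverse z) (at z)"
    using prim_setup[OF 0] by blast
  have Re: "Re z < 0" if "z \<in> Dm r" for z using that by (simp add: Dm_def)
  define P where "P z = eval_fls H z + c * Ln (-z)" for z
  have "inL P"
  proof -
    have "inL (\<lambda>z. eval_fls H z * Ln (-z) ^ 0 + c * Ln (-z) ^ 1)"
      by (intro inL_add inL_cmult inL_log_term inL_Ln_pow RH0)
    thus ?thesis by (simp add: P_def[abs_def])
  qed
  moreover have "(P has_field_derivative eval_fls F z * Ln (-z) ^ 0) (at z)" if z: "z \<in> Dm r" for z
  proof -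
    have "(P has_field_derivative (eval_fls F z - c * inverse z) + c * inverse z) (at z)"
      unfolding P_def by (intro DERIV_add DERIV_cmult dHz z Ln_deriv Re)
    thus ?thesis by simp
  qed
  ultimately show ?case using r0 by blast
next
  case (Suc j)
  obtain c H r where r0: "0 < r" and RH0: "0 < fls_conv_radius H"
    and dHz: "\<And>z. z \<in> Dm r \<Longrightarrow> (eval_fls H has_field_derivative eval_fls F z - c * inverse z) (at z)"
    using prim_setup[OF Suc.prems] by blast
  have Re: "Re z < 0" if "z \<in> Dm r" for z using that by (simp add: Dm_def)
  have RsH: "0 < fls_conv_radius (fls_shift 1 H)" using RH0 by simp
  obtain Q \<rho>q where Q: "0 < \<rho>q" "inL Q"
    "\<And>z. z \<in> Dm \<rho>q \<Longrightarrow> (Q has_field_derivative eval_fls (fls_shift 1 H) z * Ln (-z) ^ j) (at z)"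
    using Suc.IH[OF RsH] by blast
  define P where "P z = eval_fls H z * Ln (-z) ^ Suc j - of_nat (Suc j) * Q z
      + c / of_nat (Suc (Suc j)) * Ln (-z) ^ Suc (Suc j)" for z
  define \<rho> where "\<rho> = min r \<rho>q"
  have "inL P"
  proof -
    have "inL (\<lambda>z. (eval_fls H z * Ln (-z) ^ Suc j - of_nat (Suc j) * Q z)
        + c / of_nat (Suc (Suc j)) * Ln (-z) ^ Suc (Suc j))"
      by (intro inL_add inL_diff inL_cmult inL_log_term inL_Ln_pow RH0 Q(2))
    thus ?thesis by (simp add: P_def[abs_def])
  qed
  moreover have "(P has_field_derivative eval_fls F z * Ln (-z) ^ Suc j) (at z)" if z: "z \<in> Dm \<rho>" for z
  proof -
    have "\<rho> \<le> r" "\<rho> \<le> \<rho>q" by (auto simp: \<rho>_def)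
    hence zr': "z \<in> Dm r" and zq: "z \<in> Dm \<rho>q" using z Dm_mono by blast+
    have nz: "z \<noteq> 0" using Dm_nz[OF z] .
    have evs: "eval_fls (fls_shift 1 H) z = eval_fls H z * inverse z"
      using nz by (simp add: eval_fls_shift power_int_minus)
    have "(P has_field_derivative
        ((eval_fls F z - c * inverse z) * Ln (-z) ^ Suc j + of_nat (Suc j) * (inverse z * Ln (-z) ^ j) * eval_fls H z)
        - of_nat (Suc j) * (eval_fls (fls_shift 1 H) z * Ln (-z) ^ j)
        + c / of_nat (Suc (Suc j)) * (of_nat (Suc (Suc j)) * (inverse z * Ln (-z) ^ Suc j))) (at z)"
      unfolding P_def
      using Ln_pow_deriv[OF Re[OF zr'], of "Suc j"] Ln_pow_deriv[OF Re[OF zr'], of "Suc (Suc j)"]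
      by (intro DERIV_add DERIV_diff DERIV_cmult DERIV_mult dHz zr' Q(3) zq) simp_all
    also have "((eval_fls F z - c * inverse z) * Ln (-z) ^ Suc j + of_nat (Suc j) * (inverse z * Ln (-z) ^ j) * eval_fls H z)
        - of_nat (Suc j) * (eval_fls (fls_shift 1 H) z * Ln (-z) ^ j)
        + c / of_nat (Suc (Suc j)) * (of_nat (Suc (Suc j)) * (inverse z * Ln (-z) ^ Suc j))
        = eval_fls F z * Ln (-z) ^ Suc j"
      unfolding evs by (simp add: field_simps del: of_nat_Suc)
    finally show ?thesis .
  qed
  moreover have "0 < \<rho>" using r0 Q(1) by (simp add: \<rho>_def)
  ultimately show ?case by blast
qed

lemma antideriv_inL:
  assumes "0 < \<delta>" "\<And>z. z \<in> Dm \<delta> \<Longrightarrow> (f has_field_derivative g z) (at z)" "inL g"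
  shows "inL f"
proof -
  obtain \<rho>1 M F where g: "lrep \<rho>1 M F g" using assms(3) by (auto simp: inL_def)
  have RF: "0 < fls_conv_radius (F j)" if "j \<le> M" for j
    using g that by (auto simp: lrep_def intro: less_le_trans[of 0 "ereal \<rho>1"])
  have ex: "\<forall>j. \<exists>x. j \<le> M \<longrightarrow> (0 < snd x \<and> inL (fst x) \<and>
      (\<forall>z\<in>Dm (snd x). (fst x has_field_derivative eval_fls (F j) z * Ln (-z) ^ j) (at z)))"
  proof
    fix j show "\<exists>x. j \<le> M \<longrightarrow> (0 < snd x \<and> inL (fst x) \<and>
      (\<forall>z\<in>Dm (snd x). (fst x has_field_derivative eval_fls (F j) z * Ln (-z) ^ j) (at z)))"
    proof (cases "j \<le> M")
      case True
      obtain P \<rho> where "0 < \<rho> \<and> inL P \<and> (\<forall>z\<in>Dm \<rho>. (P has_field_derivative eval_fls (F j) z * Ln (-z) ^ j) (at z))"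
        using prim[OF RF[OF True], of j] by blast
      thus ?thesis by (intro exI[of _ "(P, \<rho>)"]) simp
    qed simp
  qed
  obtain gc where g': "\<And>j. j \<le> M \<Longrightarrow> (0 < snd (gc j) \<and> inL (fst (gc j)) \<and>
      (\<forall>z\<in>Dm (snd (gc j)). (fst (gc j) has_field_derivative eval_fls (F j) z * Ln (-z) ^ j) (at z)))"
    using choice[OF ex] by blast
  define P where "P j = fst (gc j)" for j
  define \<rho>f where "\<rho>f j = snd (gc j)" for j
  have P: "\<And>j. j \<le> M \<Longrightarrow> 0 < \<rho>f j \<and> inL (P j) \<and>
      (\<forall>z\<in>Dm (\<rho>f j). (P j has_field_derivative eval_fls (F j) z * Ln (-z) ^ j) (at z))"
    using g' unfolding P_def \<rho>f_def by blast
  define \<rho>m where "\<rho>m = Min (\<rho>f ` {..M})"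
  have \<rho>m: "0 < \<rho>m" "\<And>j. j \<le> M \<Longrightarrow> \<rho>m \<le> \<rho>f j"
    using P by (auto simp: \<rho>m_def)
  define \<rho> where "\<rho> = min \<delta> (min \<rho>1 \<rho>m)"
  have \<rho>0: "0 < \<rho>" using \<rho>m assms(1) g by (simp add: \<rho>_def lrep_def)
  define PP where "PP z = (\<Sum>j\<le>M. P j z)" for z
  have iPP: "inL PP" unfolding PP_def by (intro inL_sum) (use P in auto)
  have dPP: "(PP has_field_derivative g z) (at z)" if z: "z \<in> Dm \<rho>" for z
  proof -
    have "(PP has_field_derivative (\<Sum>j\<le>M. eval_fls (F j) z * Ln (-z) ^ j)) (at z)"
      unfolding PP_def
    proof (rule DERIV_sum)
      fix j assume j: "j \<in> {..M}"
      have "\<rho> \<le> \<rho>f j" using \<rho>m(2)[of j] j by (simp add: \<rho>_def)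
      hence "z \<in> Dm (\<rho>f j)" using z Dm_mono by blast
      thus "(P j has_field_derivative eval_fls (F j) z * Ln (-z) ^ j) (at z)" using P[of j] j by auto
    qed
    moreover have "\<rho> \<le> \<rho>1" by (simp add: \<rho>_def)
    hence "z \<in> Dm \<rho>1" using z Dm_mono by blast
    ultimately show ?thesis using g by (simp add: lrep_def)
  qed
  have "\<exists>C. \<forall>z\<in>Dm \<rho>. f z - PP z = C"
  proof (rule has_field_derivative_zero_constant[OF Dm_convex])
    fix z assume z: "z \<in> Dm \<rho>"
    have "z \<in> Dm \<delta>" using z Dm_mono[of \<rho> \<delta>] by (auto simp: \<rho>_def)
    hence "((\<lambda>z. f z - PP z) has_field_derivative g z - g z) (at z)"
      by (intro DERIV_diff assms(2) dPP z)
    thus "((\<lambda>z. f z - PP z) has_field_derivative 0) (at z within Dm \<rho>)"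
      by (simp add: has_field_derivative_at_within)
  qed
  then obtain C where C: "\<And>z. z \<in> Dm \<rho> \<Longrightarrow> f z = PP z + C" by (metis add.commute diff_eq_eq)
  show ?thesis
    by (rule inL_cong[OF inL_add[OF iPP inL_const[of C]] \<rho>0]) (simp add: C)
qed


lemma inL0_deriv:
  assumes "inL0 f" "0 < \<delta>" "\<And>z. z \<in> Dm \<delta> \<Longrightarrow> (f has_field_derivative g z) (at z)"
  shows "inL0 g"
proof -
  obtain \<rho> F where r: "0 < \<rho>" "ereal \<rho> \<le> fls_conv_radius F" "\<forall>z\<in>Dm \<rho>. f z = eval_fls F z"
    using assms by (auto simp: inL0_def)
  define \<rho>' where "\<rho>' = min \<rho> \<delta>"
  have "\<forall>z\<in>Dm \<rho>'. g z = eval_fls (fls_deriv F) z"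
  proof
    fix z assume z: "z \<in> Dm \<rho>'"
    have "\<rho>' \<le> \<rho>" "\<rho>' \<le> \<delta>" by (auto simp: \<rho>'_def)
    hence z1: "z \<in> Dm \<rho>" and z2: "z \<in> Dm \<delta>" using z Dm_mono by blast+
    have "z \<in> eball 0 (fls_conv_radius F) - {0}"
      using Dm_norm[OF z1 r(2)] Dm_nz[OF z1] by auto
    hence d1: "(eval_fls F has_field_derivative eval_fls (fls_deriv F) z) (at z)"
      by (rule has_field_derivative_eval_fls)
    have ev: "eventually (\<lambda>x. f x = eval_fls F x) (nhds z)"
    proof -
      have "eventually (\<lambda>x. x \<in> Dm \<rho>) (nhds z)" using z1 Dm_open by (intro eventually_nhds_in_open) auto
      thus ?thesis by eventually_elim (use r in auto)
    qed
    have "(eval_fls F has_field_derivative g z) (at z)"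
      using assms(3)[OF z2] DERIV_cong_ev[OF refl ev refl] by blast
    thus "g z = eval_fls (fls_deriv F) z" using d1 by (rule DERIV_unique)
  qed
  moreover have "ereal \<rho>' \<le> fls_conv_radius (fls_deriv F)"
  proof -
    have "ereal \<rho>' \<le> fls_conv_radius F" by (rule ereal_le_trans'[OF _ r(2)]) (simp add: \<rho>'_def)
    thus ?thesis using fls_conv_radius_deriv[of F] by (rule order_trans)
  qed
  moreover have "0 < \<rho>'" using r assms by (simp add: \<rho>'_def)
  ultimately show ?thesis unfolding inL0_def by blast
qed

definition Ae :: "nat \<Rightarrow> nat \<Rightarrow> complex \<Rightarrow> complex" where
  "Ae r e z = Zf [(- int e, r)] z"

lemma w_negpow: "w (- int p, r) z n = exp (z * of_nat (n * r)) * of_nat n ^ p"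
  by (simp add: w_def power_int_of_nat)

lemma Ae_sums:
  assumes "Re z < 0" "0 < r"
  shows "(\<lambda>n. w (- int e, r) z (Suc n)) sums Ae r e z"
  using Zf_sums[of z "(- int e, r)" "[]"] assms by (simp add: Ae_def)

lemma germ_A0:
  assumes "0 < r" shows "inL0 (Ae r 0)"
proof -
  define g where "g z = exp (of_nat r * z)" for z :: complex
  have "g has_laurent_expansion fps_to_fls (fps_exp (of_nat r))"
    unfolding g_def by (intro has_laurent_expansion_fps has_fps_expansion_exp)
  hence "(\<lambda>z. g z * inverse (1 - g z)) has_laurent_expansion
      fps_to_fls (fps_exp (of_nat r)) * inverse (1 - fps_to_fls (fps_exp (of_nat r)))"
    by (intro laurent_expansion_intros)
  hence i0: "inL0 (\<lambda>z. g z * inverse (1 - g z))" by (rule laurent_imp_inL0)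
  show ?thesis
  proof (rule inL0_cong[OF i0 zero_less_one])
    fix z assume z: "z \<in> Dm 1"
    hence Rz: "Re z < 0" by (simp add: Dm_def)
    have ng: "norm (g z) < 1" using Rz assms by (simp add: g_def mult_pos_neg)
    have "(\<lambda>n. g z ^ n) sums (1 / (1 - g z))" by (rule geometric_sums[OF ng])
    hence "(\<lambda>n. g z * g z ^ n) sums (g z * (1 / (1 - g z)))" by (rule sums_mult)
    moreover have "w (- int 0, r) z (Suc n) = g z * g z ^ n" for n
    proof -
      have "w (- int 0, r) z (Suc n) = exp (of_nat (Suc n) * (of_nat r * z))"
        by (simp add: w_def algebra_simps)
      also have "\<dots> = g z ^ Suc n" unfolding g_def by (rule exp_of_nat_mult)
      finally show ?thesis by simp
    qed
    ultimately have "(\<lambda>n. w (- int 0, r) z (Suc n)) sums (g z * inverse (1 - g z))"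
      by (simp add: divide_inverse)
    moreover have "(\<lambda>n. w (- int 0, r) z (Suc n)) sums Ae r 0 z" by (rule Ae_sums[OF Rz assms])
    ultimately show "Ae r 0 z = g z * inverse (1 - g z)" using sums_unique2 by blast
  qed
qed

lemma germ_A:
  assumes "0 < r" shows "inL0 (Ae r e)"
proof (induction e)
  case 0 then show ?case by (rule germ_A0[OF assms])
next
  case (Suc e)
  have "inL0 (\<lambda>z. of_nat r * Ae r (Suc e) z)"
  proof (rule inL0_deriv[OF Suc zero_less_one])
    fix z assume "z \<in> Dm 1"
    hence Rz: "Re z < 0" by (simp add: Dm_def)
    have "(Zf [(- int e, r)] has_field_derivative
        (\<Sum>i<length [(- int e, r)]. of_nat (snd ([(- int e, r)] ! i)) * Zf (dec i [(- int e, r)]) z)) (at z)"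
      by (rule Zf_deriv) (use Rz assms in auto)
    moreover have "- int e - 1 = - int (Suc e)" by simp
    ultimately show "(Ae r e has_field_derivative of_nat r * Ae r (Suc e) z) (at z)"
      unfolding Ae_def[abs_def] by simp
  qed
  hence "inL0 (\<lambda>z. inverse (of_nat r) * (of_nat r * Ae r (Suc e) z))"
    by (rule inL0_mult[OF inL0_const])
  moreover have "(\<lambda>z. inverse (of_nat r) * (of_nat r * Ae r (Suc e) z)) = Ae r (Suc e)"
    using assms by (auto simp: fun_eq_iff)
  ultimately show ?case by simp
qed


definition Gf :: "nat \<Rightarrow> nat \<Rightarrow> complex \<Rightarrow> nat \<Rightarrow> complex" where
  "Gf p r z b = (\<Sum>t. w (- int p, r) z (t + b))"

lemma summable_w:
  assumes "Re z < 0" "0 < r"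
  shows "summable (\<lambda>n. w (- int p, r) z n)"
proof -
  have "summable (\<lambda>n. w (- int p, r) z (Suc n))"
    using Ae_sums[OF assms, of p] by (rule sums_summable)
  thus ?thesis by (rule summable_Suc_iff[THEN iffD1])
qed

lemma Gf_split:
  assumes "Re z < 0" "0 < r" "a \<le> b"
  shows "Gf p r z a = (\<Sum>n\<in>{a..<b}. w (- int p, r) z n) + Gf p r z b"
proof -
  define f where "f t = w (- int p, r) z (t + a)" for t
  have sf: "summable f" unfolding f_def
    using summable_w[OF assms(1,2), of p] summable_iff_shift[of "\<lambda>n. w (- int p, r) z n" a] by simp
  have "Gf p r z a = suminf f" by (simp add: Gf_def f_def[abs_def])
  also have "\<dots> = (\<Sum>t. f (t + (b - a))) + (\<Sum>i<b-a. f i)" by (rule suminf_split_initial_segment[OF sf])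
  also have "(\<Sum>t. f (t + (b - a))) = Gf p r z b"
  proof -
    have "\<And>t. t + (b - a) + a = t + b" using assms(3) by simp
    thus ?thesis by (simp add: f_def Gf_def)
  qed
  also have "(\<Sum>i<b-a. f i) = (\<Sum>n\<in>{a..<b}. w (- int p, r) z n)"
  proof -
    have "(\<Sum>i<b-a. f i) = (\<Sum>i\<in>{0..<b-a}. w (- int p, r) z (i + a))" by (simp add: f_def atLeast0LessThan)
    also have "\<dots> = (\<Sum>n\<in>{0+a..<(b-a)+a}. w (- int p, r) z n)" by (rule sum.shift_bounds_nat_ivl[symmetric])
    also have "{0+a..<(b-a)+a} = {a..<b}" using assms(3) by auto
    finally show ?thesis .
  qed
  finally show ?thesis by (simp add: add.commute)
qed

lemma w_mult:
  assumes "1 \<le> n"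
  shows "w (a, r1) z n * w (b, r2) z n = w (a + b, r1 + r2) z n"
proof -
  have nz: "(of_nat n :: complex) \<noteq> 0" using assms by simp
  have "(of_nat n :: complex) powi (- (a + b)) = of_nat n powi (- a) * of_nat n powi (- b)"
    using nz by (simp add: power_int_add[symmetric])
  moreover have "exp (z * of_nat (n * (r1 + r2))) = exp (z * of_nat (n * r1)) * exp (z * of_nat (n * r2))"
    by (simp add: exp_add[symmetric] algebra_simps)
  ultimately show ?thesis by (simp add: w_def mult_ac)
qed

lemma w_negpow_split:
  "w (- int p, r) z (Suc t + b) =
     (\<Sum>e\<le>p. of_nat (p choose e) * w (- int e, r) z (Suc t) * w (- int (p - e), r) z b)"
proof -
  define A where "A = z * of_nat (Suc t * r)"
  define B where "B = z * of_nat (b * r)"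
  have "w (- int p, r) z (Suc t + b) = exp (z * of_nat ((Suc t + b) * r)) * of_nat (Suc t + b) ^ p"
    by (simp only: w_negpow)
  also have "exp (z * of_nat ((Suc t + b) * r)) = exp A * exp B"
    by (simp add: A_def B_def exp_add[symmetric] algebra_simps)
  also have "(of_nat (Suc t + b) :: complex) ^ p = (of_nat (Suc t) + of_nat b) ^ p"
    by (simp only: of_nat_add)
  also have "(of_nat (Suc t) + of_nat b :: complex) ^ p = (\<Sum>e\<le>p. of_nat (p choose e) * of_nat (Suc t) ^ e * of_nat b ^ (p - e))"
    by (rule binomial_ring)
  also have "exp A * exp B * (\<Sum>e\<le>p. of_nat (p choose e) * of_nat (Suc t) ^ e * of_nat b ^ (p - e))
      = (\<Sum>e\<le>p. of_nat (p choose e) * (exp A * of_nat (Suc t) ^ e) * (exp B * of_nat b ^ (p - e)))"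
    by (simp add: sum_distrib_left mult_ac)
  also have "\<dots> = (\<Sum>e\<le>p. of_nat (p choose e) * w (- int e, r) z (Suc t) * w (- int (p - e), r) z b)"
    by (intro sum.cong refl) (simp only: w_negpow A_def B_def)
  finally show ?thesis .
qed

lemma Gf_expand:
  assumes "Re z < 0" "0 < r"
  shows "Gf p r z b = w (- int p, r) z b + (\<Sum>e\<le>p. of_nat (p choose e) * Ae r e z * w (- int (p - e), r) z b)"
proof -
  define S where "S = (\<Sum>e\<le>p. of_nat (p choose e) * Ae r e z * w (- int (p - e), r) z b)"
  have "(\<lambda>t. \<Sum>e\<le>p. of_nat (p choose e) * w (- int e, r) z (Suc t) * w (- int (p - e), r) z b) sums S"
    unfolding S_def
  proof (rule sums_sum)
    fix e assume "e \<in> {..p}"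
    have "(\<lambda>t. of_nat (p choose e) * w (- int e, r) z (Suc t)) sums (of_nat (p choose e) * Ae r e z)"
      by (rule sums_mult[OF Ae_sums[OF assms]])
    thus "(\<lambda>t. of_nat (p choose e) * w (- int e, r) z (Suc t) * w (- int (p - e), r) z b) sums
          (of_nat (p choose e) * Ae r e z * w (- int (p - e), r) z b)"
      by (rule sums_mult2)
  qed
  hence "(\<lambda>t. w (- int p, r) z (Suc t + b)) sums S" by (simp only: w_negpow_split)
  hence "(\<lambda>t. w (- int p, r) z (t + b)) sums (S + w (- int p, r) z (0 + b))"
    by (subst sums_Suc_iff[symmetric]) simp
  hence "Gf p r z b = S + w (- int p, r) z b" by (simp add: Gf_def sums_iff)
  thus ?thesis by (simp add: S_def)
qed

lemma Gf_1:
  assumes "Re z < 0" "0 < r"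
  shows "Gf p r z 1 = Ae r p z"
proof -
  have "(\<lambda>t. w (- int p, r) z (t + 1)) sums Ae r p z" using Ae_sums[OF assms, of p] by simp
  thus ?thesis by (simp add: Gf_def sums_iff)
qed

lemma T_single:
  assumes "Re z < 0" "0 < r" "1 \<le> b"
  shows "T [(- int p, r)] z b = Ae r p z - Gf p r z b"
proof -
  have h: "T [(- int p, r)] z b + Gf p r z b = Ae r p z"
    using Gf_split[OF assms(1,2,3), of p] Gf_1[OF assms(1,2), of p] by simp
  show ?thesis using h by (metis add_diff_cancel_right')
qed

lemma swap_sum:
  fixes f g :: "nat \<Rightarrow> 'a::comm_ring"
  shows "(\<Sum>n\<in>{1..<b}. f n * (\<Sum>m\<in>{1..<n}. g m)) = (\<Sum>m\<in>{1..<b}. g m * (\<Sum>n\<in>{m<..<b}. f n))"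
proof -
  have "(\<Sum>n\<in>{1..<b}. f n * (\<Sum>m\<in>{1..<n}. g m)) = (\<Sum>n\<in>{1..<b}. \<Sum>m\<in>{1..<b}. if m < n then f n * g m else 0)"
  proof (rule sum.cong[OF refl])
    fix n assume n: "n \<in> {1..<b}"
    have "{m \<in> {1..<b}. m < n} = {1..<n}" using n by auto
    hence "(\<Sum>m\<in>{1..<b}. if m < n then f n * g m else 0) = (\<Sum>m\<in>{1..<n}. f n * g m)"
      by (simp add: sum.inter_filter[symmetric])
    thus "f n * (\<Sum>m\<in>{1..<n}. g m) = (\<Sum>m\<in>{1..<b}. if m < n then f n * g m else 0)"
      by (simp add: sum_distrib_left)
  qed
  also have "\<dots> = (\<Sum>m\<in>{1..<b}. \<Sum>n\<in>{1..<b}. if m < n then f n * g m else 0)" by (rule sum.swap)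
  also have "\<dots> = (\<Sum>m\<in>{1..<b}. g m * (\<Sum>n\<in>{m<..<b}. f n))"
  proof (rule sum.cong[OF refl])
    fix m assume m: "m \<in> {1..<b}"
    have "{n \<in> {1..<b}. m < n} = {m<..<b}" using m by auto
    hence "(\<Sum>n\<in>{1..<b}. if m < n then f n * g m else 0) = (\<Sum>n\<in>{m<..<b}. f n * g m)"
      by (simp add: sum.inter_filter[symmetric])
    thus "(\<Sum>n\<in>{1..<b}. if m < n then f n * g m else 0) = g m * (\<Sum>n\<in>{m<..<b}. f n)"
      by (simp add: sum_distrib_left mult_ac)
  qed
  finally show ?thesis .
qed

lemma T_two:
  assumes "Re z < 0" "0 < r"
  shows "T ((- int p, r) # (s', r') # q) z b =
    (\<Sum>e\<le>p. of_nat (p choose e) * Ae r e z * T ((s' - int (p - e), r' + r) # q) z b)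
    - Gf p r z b * T ((s', r') # q) z b"
proof -
  define f where "f n = w (- int p, r) z n" for n
  define g where "g m = w (s', r') z m * T q z m" for m
  define c where "c e = of_nat (p choose e) * Ae r e z" for e
  define W where "W e m = w (- int (p - e), r) z m" for e m
  have inner: "(\<Sum>n\<in>{m<..<b}. f n) = (\<Sum>e\<le>p. of_nat (p choose e) * Ae r e z * w (- int (p - e), r) z m) - Gf p r z b"
    if m: "m \<in> {1..<b}" for m
  proof -
    have "{m<..<b} = {Suc m..<b}" by auto
    hence "(\<Sum>n\<in>{m<..<b}. f n) = Gf p r z (Suc m) - Gf p r z b"
      using Gf_split[OF assms, of "Suc m" b p] m by (simp add: f_def)
    moreover have "Gf p r z m = f m + Gf p r z (Suc m)"
      using Gf_split[OF assms, of m "Suc m" p] by (simp add: f_def)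
    moreover have "Gf p r z m = f m + (\<Sum>e\<le>p. of_nat (p choose e) * Ae r e z * w (- int (p - e), r) z m)"
      using Gf_expand[OF assms, of p m] by (simp add: f_def)
    ultimately show ?thesis by simp
  qed
  have X: "(\<Sum>m\<in>{1..<b}. g m * W e m) = T ((s' - int (p - e), r' + r) # q) z b" for e
  proof -
    have "g m * W e m = w (s' - int (p - e), r' + r) z m * T q z m" if "m \<in> {1..<b}" for m
      using w_mult[of m s' r' z "- int (p - e)" r] that by (simp add: g_def W_def mult_ac)
    hence "(\<Sum>m\<in>{1..<b}. g m * W e m) = (\<Sum>m\<in>{1..<b}. w (s' - int (p - e), r' + r) z m * T q z m)"
      by (rule sum.cong[OF refl])
    thus ?thesis by simp
  qed
  have S1: "(\<Sum>m\<in>{1..<b}. \<Sum>e\<le>p. c e * (g m * W e m)) = (\<Sum>e\<le>p. c e * T ((s' - int (p - e), r' + r) # q) z b)"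
  proof -
    have "(\<Sum>m\<in>{1..<b}. \<Sum>e\<le>p. c e * (g m * W e m)) = (\<Sum>e\<le>p. \<Sum>m\<in>{1..<b}. c e * (g m * W e m))"
      by (rule sum.swap)
    also have "\<dots> = (\<Sum>e\<le>p. c e * (\<Sum>m\<in>{1..<b}. g m * W e m))"
      by (simp only: sum_distrib_left)
    also have "\<dots> = (\<Sum>e\<le>p. c e * T ((s' - int (p - e), r' + r) # q) z b)"
      by (simp only: X)
    finally show ?thesis .
  qed
  have S2: "(\<Sum>m\<in>{1..<b}. g m) = T ((s', r') # q) z b" by (simp add: g_def)
  have "T ((- int p, r) # (s', r') # q) z b = (\<Sum>n\<in>{1..<b}. f n * (\<Sum>m\<in>{1..<n}. g m))"
    by (simp add: f_def g_def)
  also have "\<dots> = (\<Sum>m\<in>{1..<b}. g m * (\<Sum>n\<in>{m<..<b}. f n))" by (rule swap_sum)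
  also have "\<dots> = (\<Sum>m\<in>{1..<b}. g m * ((\<Sum>e\<le>p. c e * W e m) - Gf p r z b))"
    by (intro sum.cong refl) (simp add: inner c_def W_def)
  also have "\<dots> = (\<Sum>m\<in>{1..<b}. \<Sum>e\<le>p. c e * (g m * W e m)) - Gf p r z b * (\<Sum>m\<in>{1..<b}. g m)"
    by (simp add: right_diff_distrib sum_subtractf sum_distrib_left mult_ac)
  also have "\<dots> = (\<Sum>e\<le>p. c e * T ((s' - int (p - e), r' + r) # q) z b) - Gf p r z b * T ((s', r') # q) z b"
    by (simp only: S1 S2)
  finally show ?thesis by (simp add: c_def)
qed


type_synonym lcomb = "((complex \<Rightarrow> complex) \<times> (int \<times> nat) list) list"

definition evT :: "lcomb \<Rightarrow> complex \<Rightarrow> nat \<Rightarrow> complex" where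
  "evT L z b = (\<Sum>x\<leftarrow>L. fst x z * T (snd x) z b)"

definition evZ :: "lcomb \<Rightarrow> complex \<Rightarrow> complex" where
  "evZ L z = (\<Sum>x\<leftarrow>L. fst x z * Zf (snd x) z)"

lemma evT_append: "evT (L1 @ L2) z b = evT L1 z b + evT L2 z b"
  by (simp add: evT_def)

lemma evT_Cons_pre:
  "evT (map (\<lambda>x. (fst x, q # snd x)) L) z b = (\<Sum>n\<in>{1..<b}. w q z n * evT L z n)"
proof (induction L)
  case Nil then show ?case by (simp add: evT_def)
next
  case (Cons x L)
  have "evT (map (\<lambda>x. (fst x, q # snd x)) (x # L)) z b
      = fst x z * T (q # snd x) z b + evT (map (\<lambda>x. (fst x, q # snd x)) L) z b"
    by (simp add: evT_def)
  also have "\<dots> = (\<Sum>n\<in>{1..<b}. w q z n * (fst x z * T (snd x) z n)) + (\<Sum>n\<in>{1..<b}. w q z n * evT L z n)"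
    by (simp add: Cons.IH sum_distrib_left mult_ac)
  also have "\<dots> = (\<Sum>n\<in>{1..<b}. w q z n * evT (x # L) z n)"
    by (simp add: evT_def sum.distrib[symmetric] ring_distribs)
  finally show ?case .
qed

lemma evT_upt:
  "evT (map (\<lambda>e. (c e, Y e)) [0..<Suc p]) z b = (\<Sum>e\<le>p. c e z * T (Y e) z b)"
proof -
  have "evT (map (\<lambda>e. (c e, Y e)) [0..<Suc p]) z b = sum_list (map (\<lambda>e. c e z * T (Y e) z b) [0..<Suc p])"
    by (simp add: evT_def o_def)
  also have "\<dots> = sum (\<lambda>e. c e z * T (Y e) z b) (set [0..<Suc p])"
    by (rule sum_set_upt_conv_sum_list_nat[symmetric])
  also have "set [0..<Suc p] = {..p}" by auto
  finally show ?thesis .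
qed

lemma LIN:
  assumes "\<forall>n\<ge>1. T X z n = evT L z n"
  shows "1 \<le> b \<Longrightarrow> T (pre @ X) z b = evT (map (\<lambda>x. (fst x, pre @ snd x)) L) z b"
proof (induction pre arbitrary: b)
  case Nil then show ?case using assms by simp
next
  case (Cons q pre)
  have "T (q # pre @ X) z b = (\<Sum>n\<in>{1..<b}. w q z n * T (pre @ X) z n)" by simp
  also have "\<dots> = (\<Sum>n\<in>{1..<b}. w q z n * evT (map (\<lambda>x. (fst x, pre @ snd x)) L) z n)"
    by (intro sum.cong refl) (simp add: Cons.IH)
  also have "\<dots> = evT (map (\<lambda>x. (fst x, q # snd x)) (map (\<lambda>x. (fst x, pre @ snd x)) L)) z b"
    by (rule evT_Cons_pre[symmetric])
  also have "map (\<lambda>x. (fst x, q # snd x)) (map (\<lambda>x. (fst x, pre @ snd x)) L)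
      = map (\<lambda>x. (fst x, (q # pre) @ snd x)) L" by simp
  finally show ?case by simp
qed

lemma GLIFT:
  assumes "Re z < 0" "0 < r" "\<forall>n\<ge>1. T X z n = evT L z n - Gf p r z n * T V z n"
  shows "T ((s0, r0) # X) z b = evT (map (\<lambda>x. (fst x, (s0, r0) # snd x)) L @
      (\<lambda>_. -1, (s0 - int p, r0 + r) # V) #
      map (\<lambda>e. (\<lambda>z. (- of_nat (p choose e)) * Ae r e z, (s0 - int (p - e), r0 + r) # V)) [0..<Suc p]) z b"
proof -
  define q where "q = (s0, r0)"
  have wG: "w q z n * Gf p r z n = w (s0 - int p, r0 + r) z n
      + (\<Sum>e\<le>p. of_nat (p choose e) * Ae r e z * w (s0 - int (p - e), r0 + r) z n)" if n: "1 \<le> n" for n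
  proof -
    have "w q z n * Gf p r z n = w q z n * w (- int p, r) z n
        + (\<Sum>e\<le>p. of_nat (p choose e) * Ae r e z * (w q z n * w (- int (p - e), r) z n))"
      by (simp add: Gf_expand[OF assms(1,2)] ring_distribs sum_distrib_left mult_ac)
    also have "w q z n * w (- int p, r) z n = w (s0 - int p, r0 + r) z n"
      using w_mult[OF n, of s0 r0 z "- int p" r] by (simp add: q_def)
    also have "(\<Sum>e\<le>p. of_nat (p choose e) * Ae r e z * (w q z n * w (- int (p - e), r) z n))
        = (\<Sum>e\<le>p. of_nat (p choose e) * Ae r e z * w (s0 - int (p - e), r0 + r) z n)"
    proof (intro sum.cong refl)
      fix e
      have "w q z n * w (- int (p - e), r) z n = w (s0 - int (p - e), r0 + r) z n"
        using w_mult[OF n, of s0 r0 z "- int (p - e)" r] by (simp add: q_def)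
      thus "of_nat (p choose e) * Ae r e z * (w q z n * w (- int (p - e), r) z n)
          = of_nat (p choose e) * Ae r e z * w (s0 - int (p - e), r0 + r) z n" by simp
    qed
    finally show ?thesis .
  qed
  have "T (q # X) z b = (\<Sum>n\<in>{1..<b}. w q z n * (evT L z n - Gf p r z n * T V z n))"
    using assms(3) by (simp add: q_def)
  also have "\<dots> = (\<Sum>n\<in>{1..<b}. w q z n * evT L z n) - (\<Sum>n\<in>{1..<b}. (w q z n * Gf p r z n) * T V z n)"
    by (simp add: right_diff_distrib sum_subtractf mult_ac)
  also have "(\<Sum>n\<in>{1..<b}. (w q z n * Gf p r z n) * T V z n)
      = (\<Sum>n\<in>{1..<b}. w (s0 - int p, r0 + r) z n * T V z n
          + (\<Sum>e\<le>p. of_nat (p choose e) * Ae r e z * (w (s0 - int (p - e), r0 + r) z n * T V z n)))"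
    by (intro sum.cong refl) (simp add: wG ring_distribs sum_distrib_left sum_distrib_right mult_ac)
  also have "\<dots> = T ((s0 - int p, r0 + r) # V) z b
      + (\<Sum>e\<le>p. of_nat (p choose e) * Ae r e z * T ((s0 - int (p - e), r0 + r) # V) z b)"
    by (simp add: sum.distrib sum_distrib_left) (rule sum.swap)
  also have "(\<Sum>n\<in>{1..<b}. w q z n * evT L z n) = evT (map (\<lambda>x. (fst x, q # snd x)) L) z b"
    by (rule evT_Cons_pre[symmetric])
  finally have "T (q # X) z b = evT (map (\<lambda>x. (fst x, q # snd x)) L) z b -
     (T ((s0 - int p, r0 + r) # V) z b +
      (\<Sum>e\<le>p. of_nat (p choose e) * Ae r e z * T ((s0 - int (p - e), r0 + r) # V) z b))" .
  moreover have "evT (map (\<lambda>e. (\<lambda>z. (- of_nat (p choose e)) * Ae r e z, (s0 - int (p - e), r0 + r) # V)) [0..<Suc p]) z b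
      = (\<Sum>e\<le>p. (- of_nat (p choose e)) * Ae r e z * T ((s0 - int (p - e), r0 + r) # V) z b)"
    by (rule evT_upt[of "\<lambda>e z. (- of_nat (p choose e)) * Ae r e z" "\<lambda>e. (s0 - int (p - e), r0 + r) # V" p z b])
  moreover have "(\<Sum>e\<le>p. (- of_nat (p choose e)) * Ae r e z * T ((s0 - int (p - e), r0 + r) # V) z b)
      = - (\<Sum>e\<le>p. of_nat (p choose e) * Ae r e z * T ((s0 - int (p - e), r0 + r) # V) z b)"
    by (simp add: sum_negf[symmetric])
  ultimately show ?thesis by (simp only: evT_append q_def) (simp add: evT_def)
qed

lemma evT_lim:
  assumes "Re z < 0" "\<forall>x\<in>set L. \<forall>q\<in>set (snd x). 0 < snd q"
  shows "(\<lambda>b. evT L z b) \<longlonglongrightarrow> evZ L z"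
  using assms(2)
proof (induction L)
  case Nil then show ?case by (simp add: evT_def evZ_def)
next
  case (Cons x L)
  have "(\<lambda>b. T (snd x) z b) \<longlonglongrightarrow> Zf (snd x) z" using Cons.prems assms(1) by (intro T_lim) auto
  hence "(\<lambda>b. fst x z * T (snd x) z b + evT L z b) \<longlonglongrightarrow> fst x z * Zf (snd x) z + evZ L z"
    using Cons by (intro tendsto_add tendsto_mult_left) auto
  thus ?case by (simp add: evT_def evZ_def)
qed

lemma LIM:
  assumes "Re z < 0" "\<forall>q\<in>set sr. 0 < snd q" "\<forall>x\<in>set L. \<forall>q\<in>set (snd x). 0 < snd q"
    "\<forall>b\<ge>1. T sr z b = evT L z b"
  shows "Zf sr z = evZ L z"
proof -
  have "eventually (\<lambda>b. evT L z b = T sr z b) sequentially"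
    using assms(4) by (intro eventually_sequentiallyI[of 1]) auto
  hence "(\<lambda>b. T sr z b) \<longlonglongrightarrow> evZ L z" by (rule Lim_transform_eventually[OF evT_lim[OF assms(1,3)]])
  thus ?thesis using T_lim[OF assms(1,2)] by (rule LIMSEQ_unique[rotated])
qed

lemma Gf_lim0:
  assumes "Re z < 0" "0 < r"
  shows "(\<lambda>b. Gf p r z b) \<longlonglongrightarrow> 0"
proof -
  define f where "f n = w (- int p, r) z n" for n
  have sf: "summable f" unfolding f_def by (rule summable_w[OF assms])
  have "Gf p r z b = suminf f - (\<Sum>i<b. f i)" for b
    using suminf_split_initial_segment[OF sf, of b] by (simp add: Gf_def f_def)
  moreover have "(\<lambda>b. suminf f - (\<Sum>i<b. f i)) \<longlonglongrightarrow> suminf f - suminf f"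
    by (intro tendsto_diff tendsto_const summable_LIMSEQ sf)
  ultimately show ?thesis by simp
qed

lemma LIMG:
  assumes "Re z < 0" "0 < r" "\<forall>q\<in>set sr. 0 < snd q" "\<forall>x\<in>set L. \<forall>q\<in>set (snd x). 0 < snd q"
    "\<forall>q\<in>set V. 0 < snd q"
    "\<forall>b\<ge>1. T sr z b = evT L z b - Gf p r z b * T V z b"
  shows "Zf sr z = evZ L z"
proof -
  have "(\<lambda>b. evT L z b - Gf p r z b * T V z b) \<longlonglongrightarrow> evZ L z - 0 * Zf V z"
    by (intro tendsto_diff tendsto_mult evT_lim Gf_lim0 T_lim assms)
  hence l: "(\<lambda>b. evT L z b - Gf p r z b * T V z b) \<longlonglongrightarrow> evZ L z" by simp
  have "eventually (\<lambda>b. evT L z b - Gf p r z b * T V z b = T sr z b) sequentially"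
    using assms(6) by (intro eventually_sequentiallyI[of 1]) auto
  hence "(\<lambda>b. T sr z b) \<longlonglongrightarrow> evZ L z" by (rule Lim_transform_eventually[OF l])
  thus ?thesis using T_lim[OF assms(1,3)] by (rule LIMSEQ_unique[rotated])
qed


definition goodL :: "(int \<times> nat) list \<Rightarrow> lcomb \<Rightarrow> bool" where
  "goodL sr L \<longleftrightarrow> (\<forall>x\<in>set L. inL0 (fst x) \<and> length (snd x) + 1 = length sr \<and>
     (\<forall>q\<in>set (snd x). 0 < snd q) \<and> ((\<forall>q\<in>set sr. fst q \<le> 0) \<longrightarrow> (\<forall>q\<in>set (snd x). fst q \<le> 0)))"

lemma STEP1:
  assumes "0 < r" "\<forall>q\<in>set post. 0 < snd q"
  shows "\<exists>L1. (\<forall>z. Re z < 0 \<longrightarrow> (\<forall>n\<ge>1. T ((- int p, r) # post) z n = evT L1 z n - Gf p r z n * T post z n)) \<and>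
    (\<forall>x\<in>set L1. inL0 (fst x) \<and> length (snd x) = length post \<and> (\<forall>q\<in>set (snd x). 0 < snd q) \<and>
       ((\<forall>q\<in>set post. fst q \<le> 0) \<longrightarrow> (\<forall>q\<in>set (snd x). fst q \<le> 0)))"
proof (cases post)
  case Nil
  have "\<forall>z. Re z < 0 \<longrightarrow> (\<forall>n\<ge>1. T ((- int p, r) # post) z n = evT [(Ae r p, [])] z n - Gf p r z n * T post z n)"
    using T_single[OF _ assms(1)] Nil by (simp add: evT_def)
  moreover have "\<forall>x\<in>set [(Ae r p, [])]. inL0 (fst x) \<and> length (snd x) = length post \<and> (\<forall>q\<in>set (snd x). 0 < snd q) \<and>
       ((\<forall>q\<in>set post. fst q \<le> 0) \<longrightarrow> (\<forall>q\<in>set (snd x). fst q \<le> 0))"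
    using Nil germ_A[OF assms(1)] by simp
  ultimately show ?thesis by blast
next
  case (Cons q1 q)
  obtain s' r' where q1: "q1 = (s', r')" by (cases q1)
  define L1 where "L1 = map (\<lambda>e. (\<lambda>z. of_nat (p choose e) * Ae r e z, (s' - int (p - e), r' + r) # q)) [0..<Suc p]"
  have "\<forall>z. Re z < 0 \<longrightarrow> (\<forall>n\<ge>1. T ((- int p, r) # post) z n = evT L1 z n - Gf p r z n * T post z n)"
  proof (intro allI impI)
    fix z :: complex and n :: nat assume z: "Re z < 0"
    have "evT L1 z n = (\<Sum>e\<le>p. (of_nat (p choose e) * Ae r e z) * T ((s' - int (p - e), r' + r) # q) z n)"
      unfolding L1_def by (rule evT_upt[of "\<lambda>e z. of_nat (p choose e) * Ae r e z" "\<lambda>e. (s' - int (p - e), r' + r) # q" p z n])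
    thus "T ((- int p, r) # post) z n = evT L1 z n - Gf p r z n * T post z n"
      using T_two[OF z assms(1), of p s' r' q n] by (simp add: Cons q1)
  qed
  moreover have "\<forall>x\<in>set L1. inL0 (fst x) \<and> length (snd x) = length post \<and> (\<forall>q\<in>set (snd x). 0 < snd q) \<and>
       ((\<forall>q\<in>set post. fst q \<le> 0) \<longrightarrow> (\<forall>q\<in>set (snd x). fst q \<le> 0))"
  proof
    fix x assume "x \<in> set L1"
    hence "x \<in> (\<lambda>e. (\<lambda>z. of_nat (p choose e) * Ae r e z, (s' - int (p - e), r' + r) # q)) ` set [0..<Suc p]"
      by (simp only: L1_def set_map)
    then obtain e where x: "x = (\<lambda>z. of_nat (p choose e) * Ae r e z, (s' - int (p - e), r' + r) # q)"
      by (elim imageE) simp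
    have "inL0 (fst x)" unfolding x by (simp add: inL0_mult inL0_const germ_A[OF assms(1)])
    moreover have "\<forall>q\<in>set (snd x). 0 < snd q" using assms Cons q1 by (auto simp: x)
    moreover have "(\<forall>q\<in>set post. fst q \<le> 0) \<longrightarrow> (\<forall>q\<in>set (snd x). fst q \<le> 0)"
      using Cons q1 by (auto simp: x)
    moreover have "length (snd x) = length post" using Cons by (simp add: x)
    ultimately show "inL0 (fst x) \<and> length (snd x) = length post \<and> (\<forall>q\<in>set (snd x). 0 < snd q) \<and>
       ((\<forall>q\<in>set post. fst q \<le> 0) \<longrightarrow> (\<forall>q\<in>set (snd x). fst q \<le> 0))" by blast
  qed
  ultimately show ?thesis by blast
qed

lemma RED:
  assumes pos: "\<forall>q\<in>set sr. 0 < snd q" and sr: "sr = pre @ (- int p, r) # post"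
  shows "\<exists>L. (\<forall>z. Re z < 0 \<longrightarrow> Zf sr z = evZ L z) \<and> goodL sr L"
proof -
  have r: "0 < r" using pos sr by auto
  have ppost: "\<forall>q\<in>set post. 0 < snd q" using pos sr by auto
  obtain L1 where L1: "\<And>z n. Re z < 0 \<Longrightarrow> 1 \<le> n \<Longrightarrow> T ((- int p, r) # post) z n = evT L1 z n - Gf p r z n * T post z n"
    and L1p: "\<And>x. x \<in> set L1 \<Longrightarrow> inL0 (fst x) \<and> length (snd x) = length post \<and> (\<forall>q\<in>set (snd x). 0 < snd q) \<and>
       ((\<forall>q\<in>set post. fst q \<le> 0) \<longrightarrow> (\<forall>q\<in>set (snd x). fst q \<le> 0))"
    using STEP1[OF r ppost, of p] by blast
  show ?thesis
  proof (cases pre rule: rev_cases)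
    case Nil
    have "\<forall>z. Re z < 0 \<longrightarrow> Zf sr z = evZ L1 z"
    proof (intro allI impI)
      fix z :: complex assume z: "Re z < 0"
      show "Zf sr z = evZ L1 z"
        by (rule LIMG[OF z r pos _ ppost, of L1 p]) (use L1p L1[OF z] sr Nil in auto)
    qed
    moreover have "goodL sr L1" unfolding goodL_def
    proof
      fix x assume x: "x \<in> set L1"
      show "inL0 (fst x) \<and> length (snd x) + 1 = length sr \<and> (\<forall>q\<in>set (snd x). 0 < snd q) \<and>
         ((\<forall>q\<in>set sr. fst q \<le> 0) \<longrightarrow> (\<forall>q\<in>set (snd x). fst q \<le> 0))"
        using L1p[OF x] sr Nil by auto
    qed
    ultimately show ?thesis by blast
  next
    case (snoc pre' q0)
    obtain s0 r0 where q0: "q0 = (s0, r0)" by (cases q0)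
    define L2 where "L2 = map (\<lambda>x. (fst x, (s0, r0) # snd x)) L1 @
      (\<lambda>_. -1, (s0 - int p, r0 + r) # post) #
      map (\<lambda>e. (\<lambda>z. (- of_nat (p choose e)) * Ae r e z, (s0 - int (p - e), r0 + r) # post)) [0..<Suc p]"
    define L where "L = map (\<lambda>x. (fst x, pre' @ snd x)) L2"
    have sr': "sr = pre' @ ((s0, r0) # (- int p, r) # post)" using sr snoc q0 by simp
    have r0: "0 < r0" using pos sr' by auto
    have ppre: "\<forall>q\<in>set pre'. 0 < snd q" using pos sr' by auto
    have L2p: "inL0 (fst x) \<and> length (snd x) = Suc (length post) \<and> (\<forall>q\<in>set (snd x). 0 < snd q) \<and>
       ((\<forall>q\<in>set sr. fst q \<le> 0) \<longrightarrow> (\<forall>q\<in>set (snd x). fst q \<le> 0))" if x: "x \<in> set L2" for x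
    proof -
      consider (a) y where "y \<in> set L1" "x = (fst y, (s0, r0) # snd y)"
        | (b) "x = (\<lambda>_. -1, (s0 - int p, r0 + r) # post)"
        | (c) e where "x = (\<lambda>z. (- of_nat (p choose e)) * Ae r e z, (s0 - int (p - e), r0 + r) # post)"
      proof -
        have "x \<in> (\<lambda>x. (fst x, (s0, r0) # snd x)) ` set L1 \<or> x = (\<lambda>_. -1, (s0 - int p, r0 + r) # post) \<or>
          x \<in> (\<lambda>e. (\<lambda>z. (- of_nat (p choose e)) * Ae r e z, (s0 - int (p - e), r0 + r) # post)) ` set [0..<Suc p]"
          using x by (simp only: L2_def set_append set_map list.set(2) Un_iff insert_iff)
        thus thesis using that by blast
      qed
      thus ?thesis
      proof cases
        case a
        have "(\<forall>q\<in>set sr. fst q \<le> 0) \<longrightarrow> (\<forall>q\<in>set post. fst q \<le> 0)" using sr' by auto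
        moreover have "(\<forall>q\<in>set sr. fst q \<le> 0) \<longrightarrow> s0 \<le> 0" using sr' by auto
        moreover note Y = L1p[OF a(1)]
        ultimately show ?thesis unfolding a(2) fst_conv snd_conv using r0 by simp
      next
        case b
        have "(\<forall>q\<in>set sr. fst q \<le> 0) \<longrightarrow> (\<forall>q\<in>set post. fst q \<le> 0) \<and> s0 \<le> 0" using sr' by auto
        moreover have "(\<forall>q\<in>set sr. fst q \<le> 0) \<longrightarrow> s0 \<le> int p"
          using calculation by (meson of_nat_0_le_iff order_trans)
        ultimately show ?thesis unfolding b fst_conv snd_conv using r0 r ppost inL0_const[of "-1"] by simp
      next
        case c
        have "(\<forall>q\<in>set sr. fst q \<le> 0) \<longrightarrow> (\<forall>q\<in>set post. fst q \<le> 0) \<and> s0 \<le> 0" using sr' by auto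
        moreover have "inL0 (\<lambda>z. (- of_nat (p choose e)) * Ae r e z)"
          by (intro inL0_mult inL0_const germ_A[OF r])
        moreover have "(\<forall>q\<in>set sr. fst q \<le> 0) \<longrightarrow> s0 \<le> int (p - e)"
          using calculation(1) by (meson of_nat_0_le_iff order_trans)
        ultimately show ?thesis unfolding c fst_conv snd_conv using r0 r ppost by simp
      qed
    qed
    have "\<forall>z. Re z < 0 \<longrightarrow> Zf sr z = evZ L z"
    proof (intro allI impI)
      fix z :: complex assume z: "Re z < 0"
      have h2: "\<forall>n\<ge>1. T ((s0, r0) # (- int p, r) # post) z n = evT L2 z n"
      proof (intro allI impI)
        fix n :: nat
        show "T ((s0, r0) # (- int p, r) # post) z n = evT L2 z n"
          unfolding L2_def by (rule GLIFT[OF z r]) (intro allI impI L1[OF z])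
      qed
      have "\<forall>b\<ge>1. T sr z b = evT L z b"
      proof (intro allI impI)
        fix b :: nat assume "1 \<le> b"
        thus "T sr z b = evT L z b" unfolding sr' L_def by (rule LIN[OF h2])
      qed
      moreover have "\<forall>x\<in>set L. \<forall>q\<in>set (snd x). 0 < snd q"
      proof (intro ballI)
        fix x q assume x: "x \<in> set L" and q: "q \<in> set (snd x)"
        from x obtain y where y: "y \<in> set L2" "x = (fst y, pre' @ snd y)" unfolding L_def by auto
        show "0 < snd q" using q y(2) L2p[OF y(1)] ppre by auto
      qed
      ultimately show "Zf sr z = evZ L z" using LIM[OF z pos] by blast
    qed
    moreover have "goodL sr L" unfolding goodL_def
    proof
      fix x assume "x \<in> set L"
      then obtain y where y: "y \<in> set L2" "x = (fst y, pre' @ snd y)" by (auto simp: L_def)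
      have "(\<forall>q\<in>set sr. fst q \<le> 0) \<longrightarrow> (\<forall>q\<in>set pre'. fst q \<le> 0)" using sr' by auto
      then show "inL0 (fst x) \<and> length (snd x) + 1 = length sr \<and> (\<forall>q\<in>set (snd x). 0 < snd q) \<and>
         ((\<forall>q\<in>set sr. fst q \<le> 0) \<longrightarrow> (\<forall>q\<in>set (snd x). fst q \<le> 0))"
      proof -
        note Y = L2p[OF y(1)]
        have "length (snd x) + 1 = length sr" using Y y(2) sr' by simp
        moreover have "\<forall>q\<in>set (snd x). 0 < snd q" using Y y(2) ppre by (simp add: ball_Un)
        moreover have "inL0 (fst x)" using Y y(2) by simp
        moreover have "(\<forall>q\<in>set sr. fst q \<le> 0) \<longrightarrow> (\<forall>q\<in>set (snd x). fst q \<le> 0)"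
          using Y y(2) \<open>(\<forall>q\<in>set sr. fst q \<le> 0) \<longrightarrow> (\<forall>q\<in>set pre'. fst q \<le> 0)\<close> by (simp add: ball_Un)
        ultimately show ?thesis by blast
      qed
    qed
    ultimately show ?thesis by blast
  qed
qed


lemma inL0_sum_list:
  assumes "\<And>x. x \<in> set xs \<Longrightarrow> inL0 (g x)"
  shows "inL0 (\<lambda>z. \<Sum>x\<leftarrow>xs. g x z)"
  using assms
proof (induction xs)
  case Nil then show ?case using inL0_const[of 0] by simp
next
  case (Cons x xs) then show ?case by (simp add: inL0_add)
qed

lemma evZ_inL:
  assumes "\<And>x. x \<in> set L \<Longrightarrow> inL0 (fst x) \<and> inL (Zf (snd x))"
  shows "inL (evZ L)"
proof -
  have "inL (\<lambda>z. \<Sum>x\<leftarrow>L. fst x z * Zf (snd x) z)"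
    by (rule inL_sum_list) (use assms in \<open>auto intro: inL0_mult_inL\<close>)
  thus ?thesis by (simp add: evZ_def[abs_def])
qed

lemma evZ_inL0:
  assumes "\<And>x. x \<in> set L \<Longrightarrow> inL0 (fst x) \<and> inL0 (Zf (snd x))"
  shows "inL0 (evZ L)"
proof -
  have "inL0 (\<lambda>z. \<Sum>x\<leftarrow>L. fst x z * Zf (snd x) z)"
    by (rule inL0_sum_list) (use assms in \<open>auto intro: inL0_mult\<close>)
  thus ?thesis by (simp add: evZ_def[abs_def])
qed

lemma mu_dec:
  "i < length sr \<Longrightarrow> sum_list (map fst (dec i sr)) = sum_list (map fst sr) - 1"
proof (induction sr arbitrary: i)
  case Nil then show ?case by simp
next
  case (Cons p ps)
  show ?case
  proof (cases i)
    case 0 then show ?thesis by simp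
  next
    case (Suc j) then show ?thesis using Cons by simp
  qed
qed

lemma Dm1_Re: "z \<in> Dm 1 \<Longrightarrow> Re z < 0" by (simp add: Dm_def)

lemma main_ind:
  "length sr = k \<Longrightarrow> (\<forall>q\<in>set sr. 0 < snd q) \<Longrightarrow>
    inL (Zf sr) \<and> ((\<forall>q\<in>set sr. fst q \<le> 0) \<longrightarrow> inL0 (Zf sr))"
proof (induction k arbitrary: sr)
  case 0
  hence "Zf sr = (\<lambda>_. 1)" by (simp add: fun_eq_iff)
  thus ?case using inL0_const[of 1] inL0_imp_inL by simp
next
  case (Suc k)
  have A: "inL (Zf sr') \<and> ((\<forall>q\<in>set sr'. fst q \<le> 0) \<longrightarrow> inL0 (Zf sr'))"
    if len: "length sr' = Suc k" and pos: "\<forall>q\<in>set sr'. 0 < snd q" and ex: "\<exists>q\<in>set sr'. fst q \<le> 0" for sr'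
  proof -
    obtain q where q: "q \<in> set sr'" "fst q \<le> 0" using ex by blast
    obtain pre post where sp: "sr' = pre @ q # post" using split_list[OF q(1)] by blast
    define p where "p = nat (- fst q)"
    have q': "q = (- int p, snd q)" using q(2) by (simp add: p_def prod_eq_iff)
    obtain L where L: "\<And>z. Re z < 0 \<Longrightarrow> Zf sr' z = evZ L z" and g: "goodL sr' L"
      using RED[OF pos, of pre p "snd q" post] sp q' by auto
    have IHx: "inL (Zf (snd x)) \<and> ((\<forall>q\<in>set (snd x). fst q \<le> 0) \<longrightarrow> inL0 (Zf (snd x)))" if x: "x \<in> set L" for x
    proof -
      have "length (snd x) = k" "\<forall>q\<in>set (snd x). 0 < snd q" using g x len by (auto simp: goodL_def)
      thus ?thesis by (rule Suc.IH)
    qed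
    have "inL (evZ L)" by (rule evZ_inL) (use IHx g in \<open>auto simp: goodL_def\<close>)
    hence i1: "inL (Zf sr')" by (rule inL_cong[OF _ zero_less_one]) (simp add: L Dm1_Re)
    have "inL0 (Zf sr')" if np: "\<forall>q\<in>set sr'. fst q \<le> 0"
    proof -
      have "inL0 (evZ L)" by (rule evZ_inL0) (use IHx g np in \<open>auto simp: goodL_def\<close>)
      thus ?thesis by (rule inL0_cong[OF _ zero_less_one]) (simp add: L Dm1_Re)
    qed
    thus ?thesis using i1 by blast
  qed
  have B: "\<And>sr'. nat (sum_list (map fst sr')) = m \<Longrightarrow> length sr' = Suc k \<Longrightarrow> (\<forall>q\<in>set sr'. 0 < snd q) \<Longrightarrow> inL (Zf sr')" for m
  proof (induction m rule: less_induct)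
    case (less m)
    fix sr' :: "(int \<times> nat) list" assume mu: "nat (sum_list (map fst sr')) = m" and len: "length sr' = Suc k" and pos: "\<forall>q\<in>set sr'. 0 < snd q"
    show "inL (Zf sr')"
    proof (cases "\<exists>q\<in>set sr'. fst q \<le> 0")
      case True then show ?thesis using A[OF len pos] by blast
    next
      case False
      hence allpos: "\<forall>q\<in>set sr'. 1 \<le> fst q" by auto
      have sum1: "1 \<le> sum_list (map fst sr')"
      proof -
        obtain q qs where "sr' = q # qs" using len by (cases sr') auto
        moreover have "0 \<le> sum_list (map fst qs)" using allpos calculation
          by (intro sum_list_nonneg) auto
        ultimately show ?thesis using allpos by auto
      qed
      have di: "inL (Zf (dec i sr'))" if i: "i < length sr'" for i
      proof -
        have ld: "length (dec i sr') = Suc k" using len by simp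
        have pd: "\<forall>q\<in>set (dec i sr'). 0 < snd q" by (rule dec_pos[OF pos i])
        show ?thesis
        proof (cases "\<exists>q\<in>set (dec i sr'). fst q \<le> 0")
          case True then show ?thesis using A[OF ld pd] by blast
        next
          case False
          have "nat (sum_list (map fst (dec i sr'))) < m"
            using mu_dec[OF i] sum1 mu by simp
          thus ?thesis using less.IH ld pd by blast
        qed
      qed
      have dZ: "(Zf sr' has_field_derivative (\<Sum>i<length sr'. of_nat (snd (sr'!i)) * Zf (dec i sr') z)) (at z)"
        if "z \<in> Dm 1" for z
        by (rule Zf_deriv[OF Dm1_Re[OF that] pos])
      have ig: "inL (\<lambda>z. \<Sum>i<length sr'. of_nat (snd (sr'!i)) * Zf (dec i sr') z)"
        by (intro inL_sum inL_cmult di) auto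
      show ?thesis
        by (rule antideriv_inL[where f="Zf sr'" and g="\<lambda>z. \<Sum>i<length sr'. of_nat (snd (sr'!i)) * Zf (dec i sr') z",
              OF zero_less_one dZ ig])
    qed
  qed
  show ?case
  proof (cases "\<exists>q\<in>set sr. fst q \<le> 0")
    case True then show ?thesis using A[OF Suc.prems] by blast
  next
    case False
    have "inL (Zf sr)" using B[OF refl Suc.prems] .
    moreover have "\<not> (\<forall>q\<in>set sr. fst q \<le> 0)"
      using False Suc.prems(1) by (cases sr) auto
    ultimately show ?thesis by blast
  qed
qed

lemma conv_laurent_eval_fls:
  assumes "0 < fls_conv_radius F"
  shows "conv_laurent (eval_fls F)"
proof -
  obtain R where R: "0 < ereal R" "ereal R < fls_conv_radius F" using ereal_dense2[OF assms] by blast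
  define n where "n = fls_subdegree F"
  define N where "N = nat (- n)"
  define c where "c m = fls_nth F (int m - int N)" for m
  have "(\<lambda>m. c m * z powi (int m - int N)) sums eval_fls F z" if z: "0 < norm z" "norm z < R" for z
  proof -
    have zr: "norm z < fls_conv_radius F" using z R by (meson ereal_less_le less_ereal.simps(1) order.strict_trans)
    have s: "(\<lambda>k. fls_nth F (int k + n) * z powi (int k + n)) sums eval_fls F z"
      unfolding n_def by (rule sums_eval_fls) (use zr z in auto)
    show ?thesis
    proof (cases "n \<le> 0")
      case True
      have e: "\<And>m. int m - int N = int m + n" using True by (simp add: N_def)
      have "(\<lambda>m. c m * z powi (int m - int N)) = (\<lambda>k. fls_nth F (int k + n) * z powi (int k + n))"
        unfolding c_def by (rule ext) (simp only: e)
      thus ?thesis using s by simp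
    next
      case False
      hence N0: "N = 0" by (simp add: N_def)
      define g where "g m = c m * z powi (int m - int N)" for m
      have "g i = 0" if "i < nat n" for i
        using that False by (simp add: g_def c_def N0 n_def)
      hence "(\<lambda>i. g (i + nat n)) sums eval_fls F z \<longleftrightarrow> g sums eval_fls F z"
        by (rule sums_zero_iff_shift)
      moreover have "(\<lambda>i. g (i + nat n)) = (\<lambda>k. fls_nth F (int k + n) * z powi (int k + n))"
        using False by (simp add: g_def c_def N0 fun_eq_iff)
      ultimately have "g sums eval_fls F z" using s by simp
      thus ?thesis unfolding g_def[abs_def] .
    qed
  qed
  thus ?thesis unfolding conv_laurent_def using R(1) by (intro exI[of _ R] exI[of _ N] exI[of _ c]) auto
qed


theorem theorem3p3:
  fixes s :: "int list" and r :: "nat list"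
  assumes "length r = length s"
    and "\<forall>x\<in>set r. 0 < x"
  shows "in_laurent_log (Zfun s r)
         \<and> ((\<forall>x\<in>set s. x \<le> 0) \<longrightarrow> in_laurent (Zfun s r))"
proof -
  define sr where "sr = zip s r"
  have len: "length sr = length s" using assms(1) by (simp add: sr_def)
  have pos: "\<forall>q\<in>set sr. 0 < snd q" using assms(2) by (auto simp: sr_def dest: set_zip_rightD)
  have eq: "\<And>z. Re z < 0 \<Longrightarrow> Zfun s r z = Zf sr z" using Zfun_eq[OF assms] by (simp add: sr_def)
  have M: "inL (Zf sr) \<and> ((\<forall>q\<in>set sr. fst q \<le> 0) \<longrightarrow> inL0 (Zf sr))"
    by (rule main_ind[OF len pos])
  have part1: "in_laurent_log (Zfun s r)"
  proof -
    obtain \<rho> N F where l: "lrep \<rho> N F (Zf sr)" using M by (auto simp: inL_def)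
    have cl: "\<forall>j\<le>N. conv_laurent (eval_fls (F j))"
    proof (intro allI impI)
      fix j assume "j \<le> N"
      hence "ereal \<rho> \<le> fls_conv_radius (F j)" "0 < \<rho>" using l by (auto simp: lrep_def)
      hence "0 < fls_conv_radius (F j)" by (meson ereal_less(2) less_le_trans)
      thus "conv_laurent (eval_fls (F j))" by (rule conv_laurent_eval_fls)
    qed
    have "\<forall>eps. Re eps < 0 \<and> norm eps < \<rho> \<longrightarrow>
        Zfun s r eps = (\<Sum>j\<le>N. eval_fls (F j) eps * Ln (- eps) ^ j)"
    proof (intro allI impI)
      fix eps :: complex assume e: "Re eps < 0 \<and> norm eps < \<rho>"
      hence "eps \<in> Dm \<rho>" by (simp add: Dm_def)
      thus "Zfun s r eps = (\<Sum>j\<le>N. eval_fls (F j) eps * Ln (- eps) ^ j)"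
        using l eq e by (simp add: lrep_def)
    qed
    moreover have "0 < \<rho>" using l by (simp add: lrep_def)
    ultimately show ?thesis unfolding in_laurent_log_def using cl
      by (intro exI[of _ N] exI[of _ "\<lambda>j. eval_fls (F j)"]) blast
  qed
  have part2: "in_laurent (Zfun s r)" if np: "\<forall>x\<in>set s. x \<le> 0"
  proof -
    have "\<forall>q\<in>set sr. fst q \<le> 0" using np by (auto simp: sr_def dest: set_zip_leftD)
    hence "inL0 (Zf sr)" using M by blast
    then obtain \<rho> F where l: "0 < \<rho>" "ereal \<rho> \<le> fls_conv_radius F" "\<forall>z\<in>Dm \<rho>. Zf sr z = eval_fls F z"
      by (auto simp: inL0_def)
    have "0 < fls_conv_radius F" using l by (meson ereal_less(2) less_le_trans)
    hence "conv_laurent (eval_fls F)" by (rule conv_laurent_eval_fls)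
    moreover have "\<forall>eps. Re eps < 0 \<and> norm eps < \<rho> \<longrightarrow> Zfun s r eps = eval_fls F eps"
      using l eq by (auto simp: Dm_def)
    ultimately show ?thesis unfolding in_laurent_def using l(1)
      by (intro exI[of _ "eval_fls F"]) blast
  qed
  show ?thesis using part1 part2 by blast
qed


end
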